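(* Let $\mathbb{A}$ be a 2-category having the two-dimensional kernel diagram of a 1-cell $l$. Then: (1) $l$ is a co-Kleisli morphism if and only if $l$ has a left adjoint and $l$ is an effective op-faithful morphism; (2) $l$ is a Kleisli morphism if and only if $l$ has a right adjoint and $l$ is an effective op-faithful morphism.
   Context: A 2-category is a $\mathbf{Cat}$-enriched category; composition of 1-cells is juxtaposition, vertical composition of 2-cells is $\cdot$, horizontal composition is $\ast$, $\mathrm{id}_f$ is the identity 2-cell on $f$. $\mathbb{A}^{\mathrm{op}}$, $\mathbb{A}^{\mathrm{coop}}$ are obtained from $\mathbb{A}$ by reversing 1-cells, resp. both 1-cells and 2-cells. A 1-cell is an equivalence if it has a pseudo-inverse up to invertible 2-cells. Adjunctions (in $\mathbb{A}$) are given by unit and counit 2-cells satisfying the triangle identities. For a 1-cell $p:e\to b$ of a 2-category $\mathbb{B}$: an opcomma object of $p$ along itself is $b\uparrow_pb$ with $\delta^0,\delta^1:b\to b\uparrow_pb$, $\alpha:\delta^1p\Rightarrow\delta^0p$ such that for every $y$, $h\mapsto(h\delta^0,h\delta^1,\mathrm{id}_h\ast\alpha)$ is an isomorphism from $\mathbb{B}(b\uparrow_pb,y)$ onto the category of triples $(h_0,h_1:b\to y,\beta:h_1p\Rightarrow h_0p)$ with morphisms pairs $(\xi_0,\xi_1)$ with $(\xi_0\ast\mathrm{id}_p)\cdot\beta=\beta'\cdot(\xi_1\ast\mathrm{id}_p)$. A two-dimensional pushout of a span $f_0,f_1$ is $P$ with $q_0,q_1$, $q_0f_0=q_1f_1$,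 such that $k\mapsto(kq_0,kq_1)$ is an isomorphism from $\mathbb{B}(P,y)$ onto pairs $(k_0,k_1)$ with $k_0f_0=k_1f_1$ (morphisms pairs of 2-cells $(\xi_0,\xi_1)$ with $\xi_0\ast\mathrm{id}_{f_0}=\xi_1\ast\mathrm{id}_{f_1}$). $\mathbb{B}$ has the two-dimensional cokernel diagram of $p$ if it has $b\uparrow_pb$ and a two-dimensional pushout $b\uparrow_pb\uparrow_pb$ of $(\delta^0,\delta^1)$ with $D^0,D^2$, $D^2\delta^0=D^0\delta^1$; $D^1$ is the unique 1-cell with $D^1\delta^1=D^2\delta^1$, $D^1\delta^0=D^0\delta^0$, $\mathrm{id}_{D^1}\ast\alpha=(\mathrm{id}_{D^0}\ast\alpha)\cdot(\mathrm{id}_{D^2}\ast\alpha)$; $s^0$ is unique with $s^0\delta^0=s^0\delta^1=\mathrm{id}_b$, $\mathrm{id}_{s^0}\ast\alpha=\mathrm{id}_p$. $\mathrm{Desc}_p(y)$: pairs $(h:y\to b,\beta:\delta^1h\Rightarrow\delta^0h)$ with $(\mathrm{id}_{D^0}\ast\beta)\cdot(\mathrm{id}_{D^2}\ast\beta)=\mathrm{id}_{D^1}\ast\beta$, $\mathrm{id}_{s^0}\ast\beta=\mathrm{id}_h$, morphisms $\xi:h_1\Rightarrow h_0$ with $\beta_0\cdot(\mathrm{id}_{\delta^1}\ast\xi)=(\mathrm{id}_{\delta^0}\ast\xi)\cdot\beta_1$; a lax descent object is $L$, $d:L\to b$, $\Psi:\delta^1d\Rightarrow\delta^0d$ with $g\mapsto(dg,\Psi\ast\mathrm{id}_g)$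 an isomorphism $\mathbb{B}(y,L)\cong\mathrm{Desc}_p(y)$ for all $y$; $p^H$ is unique with $dp^H=p$, $\Psi\ast\mathrm{id}_{p^H}=\alpha$. $p$ is effective faithful in $\mathbb{B}$ if $\mathbb{B}$ has the two-dimensional cokernel diagram of $p$, a lax descent object of it, and $p^H$ is an equivalence. The codensity monad of $p$ is $(b,t,m,\eta)$ from a right Kan extension $(t,\gamma)$ of $p$ along $p$ (i.e. $\gamma:tp\Rightarrow p$ with $\beta\mapsto\gamma\cdot(\beta\ast\mathrm{id}_p)$ bijective from 2-cells $k\Rightarrow t$ to 2-cells $kp\Rightarrow p$), $m$ unique with $\gamma\cdot(m\ast\mathrm{id}_p)=\gamma\cdot(\mathrm{id}_t\ast\gamma)$, $\eta$ unique with $\gamma\cdot(\eta\ast\mathrm{id}_p)=\mathrm{id}_p$. An Eilenberg–Moore object is $b^{\mathsf{T}}$ with $u$, $\mu:tu\Rightarrow u$ such that $g\mapsto(ug,\mu\ast\mathrm{id}_g)$ is an isomorphism onto the category of pairs $(h,\beta:th\Rightarrow h)$ with $\beta\cdot(\mathrm{id}_t\ast\beta)=\beta\cdot(m\ast\mathrm{id}_h)$, $\beta\cdot(\eta\ast\mathrm{id}_h)=\mathrm{id}_h$ (morphisms $\xi$ with $\xi\cdot\beta_1=\beta_0\cdot(\mathrm{id}_t\ast\xi)$). $p$ is monadic in $\mathbb{B}$ if it has a codensity monad with an Eilenberg–Moore object and the unique $p^{\mathsf{T}}$ with $up^{\mathsf{T}}=p$, $\mu\ast\mathrm{id}_{p^{\mathsf{T}}}=\gamma$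 is an equivalence. Duals in $\mathbb{A}$: the two-dimensional kernel diagram of $l$ is its two-dimensional cokernel diagram in $\mathbb{A}^{\mathrm{op}}$; $l$ is effective op-faithful if it is effective faithful in $\mathbb{A}^{\mathrm{op}}$; $l$ is a Kleisli morphism if it is monadic in $\mathbb{A}^{\mathrm{op}}$, and a co-Kleisli morphism if it is monadic in $\mathbb{A}^{\mathrm{coop}}$. *)

theory Defs
  imports Main
begin

text \<open>A 2-category is given by a set of objects, 1-cells and 2-cells (of types 'o, 'a, 'c).
  comp1 g f is the juxtaposition g f (first f, then g); vcomp a b is a \<cdot> b (first b, then a);
  hcomp a b is a \<ast> b, where a is a 2-cell between 1-cells composed after those of b.\<close>

record ('o, 'a, 'c) twocat =
  Obj   :: "'o set"
  Arr   :: "'a set"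
  src1  :: "'a \<Rightarrow> 'o"
  tgt1  :: "'a \<Rightarrow> 'o"
  comp1 :: "'a \<Rightarrow> 'a \<Rightarrow> 'a"
  id1   :: "'o \<Rightarrow> 'a"
  Cell  :: "'c set"
  dom2  :: "'c \<Rightarrow> 'a"
  cod2  :: "'c \<Rightarrow> 'a"
  vcomp :: "'c \<Rightarrow> 'c \<Rightarrow> 'c"
  hcomp :: "'c \<Rightarrow> 'c \<Rightarrow> 'c"
  id2   :: "'a \<Rightarrow> 'c"

definition hom1 :: "('o,'a,'c) twocat \<Rightarrow> 'o \<Rightarrow> 'o \<Rightarrow> 'a set" where
  "hom1 B x y = {f \<in> Arr B. src1 B f = x \<and> tgt1 B f = y}"

definition hom2 :: "('o,'a,'c) twocat \<Rightarrow> 'a \<Rightarrow> 'a \<Rightarrow> 'c set" where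
  "hom2 B f g = {\<alpha> \<in> Cell B. dom2 B \<alpha> = f \<and> cod2 B \<alpha> = g}"

definition two_category :: "('o,'a,'c) twocat \<Rightarrow> bool" where
  "two_category B \<longleftrightarrow>
    (\<forall>f\<in>Arr B. src1 B f \<in> Obj B \<and> tgt1 B f \<in> Obj B) \<and>
    (\<forall>x\<in>Obj B. id1 B x \<in> hom1 B x x) \<and>
    (\<forall>f\<in>Arr B. \<forall>g\<in>Arr B. src1 B g = tgt1 B f \<longrightarrow>
        comp1 B g f \<in> hom1 B (src1 B f) (tgt1 B g)) \<and>
    (\<forall>f\<in>Arr B. \<forall>g\<in>Arr B. \<forall>h\<in>Arr B. src1 B h = tgt1 B g \<and> src1 B g = tgt1 B f \<longrightarrow>
        comp1 B h (comp1 B g f) = comp1 B (comp1 B h g) f) \<and>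
    (\<forall>f\<in>Arr B. comp1 B (id1 B (tgt1 B f)) f = f \<and> comp1 B f (id1 B (src1 B f)) = f) \<and>
    (\<forall>\<alpha>\<in>Cell B. dom2 B \<alpha> \<in> Arr B \<and> cod2 B \<alpha> \<in> Arr B \<and>
        src1 B (dom2 B \<alpha>) = src1 B (cod2 B \<alpha>) \<and> tgt1 B (dom2 B \<alpha>) = tgt1 B (cod2 B \<alpha>)) \<and>
    (\<forall>f\<in>Arr B. id2 B f \<in> hom2 B f f) \<and>
    (\<forall>\<alpha>\<in>Cell B. \<forall>\<beta>\<in>Cell B. cod2 B \<beta> = dom2 B \<alpha> \<longrightarrow>
        vcomp B \<alpha> \<beta> \<in> hom2 B (dom2 B \<beta>) (cod2 B \<alpha>)) \<and>
    (\<forall>\<alpha>\<in>Cell B. \<forall>\<beta>\<in>Cell B. \<forall>\<gamma>\<in>Cell B. cod2 B \<gamma> = dom2 B \<beta> \<and> cod2 B \<beta> = dom2 B \<alpha> \<longrightarrow>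
        vcomp B \<alpha> (vcomp B \<beta> \<gamma>) = vcomp B (vcomp B \<alpha> \<beta>) \<gamma>) \<and>
    (\<forall>\<alpha>\<in>Cell B. vcomp B (id2 B (cod2 B \<alpha>)) \<alpha> = \<alpha> \<and> vcomp B \<alpha> (id2 B (dom2 B \<alpha>)) = \<alpha>) \<and>
    (\<forall>\<alpha>\<in>Cell B. \<forall>\<beta>\<in>Cell B. src1 B (dom2 B \<alpha>) = tgt1 B (dom2 B \<beta>) \<longrightarrow>
        hcomp B \<alpha> \<beta> \<in> hom2 B (comp1 B (dom2 B \<alpha>) (dom2 B \<beta>)) (comp1 B (cod2 B \<alpha>) (cod2 B \<beta>))) \<and>
    (\<forall>\<alpha>\<in>Cell B. \<forall>\<beta>\<in>Cell B. \<forall>\<gamma>\<in>Cell B.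
        src1 B (dom2 B \<alpha>) = tgt1 B (dom2 B \<beta>) \<and> src1 B (dom2 B \<beta>) = tgt1 B (dom2 B \<gamma>) \<longrightarrow>
        hcomp B \<alpha> (hcomp B \<beta> \<gamma>) = hcomp B (hcomp B \<alpha> \<beta>) \<gamma>) \<and>
    (\<forall>\<alpha>\<in>Cell B. hcomp B (id2 B (id1 B (tgt1 B (dom2 B \<alpha>)))) \<alpha> = \<alpha> \<and>
        hcomp B \<alpha> (id2 B (id1 B (src1 B (dom2 B \<alpha>)))) = \<alpha>) \<and>
    (\<forall>f\<in>Arr B. \<forall>g\<in>Arr B. src1 B g = tgt1 B f \<longrightarrow>
        hcomp B (id2 B g) (id2 B f) = id2 B (comp1 B g f)) \<and>
    (\<forall>\<alpha>\<in>Cell B. \<forall>\<alpha>'\<in>Cell B. \<forall>\<beta>\<in>Cell B. \<forall>\<beta>'\<in>Cell B.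
        cod2 B \<alpha> = dom2 B \<alpha>' \<and> cod2 B \<beta> = dom2 B \<beta>' \<and> src1 B (dom2 B \<alpha>) = tgt1 B (dom2 B \<beta>) \<longrightarrow>
        hcomp B (vcomp B \<alpha>' \<alpha>) (vcomp B \<beta>' \<beta>) = vcomp B (hcomp B \<alpha>' \<beta>') (hcomp B \<alpha> \<beta>))"

definition op2 :: "('o,'a,'c) twocat \<Rightarrow> ('o,'a,'c) twocat" where
  "op2 B = B\<lparr>src1 := tgt1 B, tgt1 := src1 B, comp1 := (\<lambda>g f. comp1 B f g),
             hcomp := (\<lambda>\<alpha> \<beta>. hcomp B \<beta> \<alpha>)\<rparr>"

definition coop2 :: "('o,'a,'c) twocat \<Rightarrow> ('o,'a,'c) twocat" where
  "coop2 B = B\<lparr>src1 := tgt1 B, tgt1 := src1 B, comp1 := (\<lambda>g f. comp1 B f g),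
             hcomp := (\<lambda>\<alpha> \<beta>. hcomp B \<beta> \<alpha>),
             dom2 := cod2 B, cod2 := dom2 B, vcomp := (\<lambda>\<alpha> \<beta>. vcomp B \<beta> \<alpha>)\<rparr>"

definition invertible2 :: "('o,'a,'c) twocat \<Rightarrow> 'c \<Rightarrow> bool" where
  "invertible2 B \<alpha> \<longleftrightarrow> \<alpha> \<in> Cell B \<and>
     (\<exists>\<beta>\<in>hom2 B (cod2 B \<alpha>) (dom2 B \<alpha>).
        vcomp B \<alpha> \<beta> = id2 B (cod2 B \<alpha>) \<and> vcomp B \<beta> \<alpha> = id2 B (dom2 B \<alpha>))"

definition equivalence1 :: "('o,'a,'c) twocat \<Rightarrow> 'a \<Rightarrow> bool" where
  "equivalence1 B f \<longleftrightarrow> f \<in> Arr B \<and>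
     (\<exists>g\<in>hom1 B (tgt1 B f) (src1 B f).
        (\<exists>a\<in>hom2 B (comp1 B g f) (id1 B (src1 B f)). invertible2 B a) \<and>
        (\<exists>b\<in>hom2 B (comp1 B f g) (id1 B (tgt1 B f)). invertible2 B b))"

text \<open>adjunction B f g \<eta> \<epsilon>: f is left adjoint to g, with unit \<eta> and counit \<epsilon>.\<close>

definition adjunction :: "('o,'a,'c) twocat \<Rightarrow> 'a \<Rightarrow> 'a \<Rightarrow> 'c \<Rightarrow> 'c \<Rightarrow> bool" where
  "adjunction B f g \<eta> \<epsilon> \<longleftrightarrow> f \<in> Arr B \<and> g \<in> hom1 B (tgt1 B f) (src1 B f) \<and>
     \<eta> \<in> hom2 B (id1 B (src1 B f)) (comp1 B g f) \<and>
     \<epsilon> \<in> hom2 B (comp1 B f g) (id1 B (tgt1 B f)) \<and>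
     vcomp B (hcomp B \<epsilon> (id2 B f)) (hcomp B (id2 B f) \<eta>) = id2 B f \<and>
     vcomp B (hcomp B (id2 B g) \<epsilon>) (hcomp B \<eta> (id2 B g)) = id2 B g"

definition has_left_adjoint :: "('o,'a,'c) twocat \<Rightarrow> 'a \<Rightarrow> bool" where
  "has_left_adjoint B l \<longleftrightarrow> (\<exists>r \<eta> \<epsilon>. adjunction B r l \<eta> \<epsilon>)"

definition has_right_adjoint :: "('o,'a,'c) twocat \<Rightarrow> 'a \<Rightarrow> bool" where
  "has_right_adjoint B l \<longleftrightarrow> (\<exists>r \<eta> \<epsilon>. adjunction B l r \<eta> \<epsilon>)"

definition opcomma :: "('o,'a,'c) twocat \<Rightarrow> 'a \<Rightarrow> 'o \<Rightarrow> 'a \<Rightarrow> 'a \<Rightarrow> 'c \<Rightarrow> bool" where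
  "opcomma B p c d0 d1 \<alpha> \<longleftrightarrow>
     p \<in> Arr B \<and> c \<in> Obj B \<and> d0 \<in> hom1 B (tgt1 B p) c \<and> d1 \<in> hom1 B (tgt1 B p) c \<and>
     \<alpha> \<in> hom2 B (comp1 B d1 p) (comp1 B d0 p) \<and>
     (\<forall>y\<in>Obj B.
       (\<forall>h0\<in>hom1 B (tgt1 B p) y. \<forall>h1\<in>hom1 B (tgt1 B p) y.
          \<forall>\<beta>\<in>hom2 B (comp1 B h1 p) (comp1 B h0 p).
            \<exists>!h. h \<in> hom1 B c y \<and> comp1 B h d0 = h0 \<and> comp1 B h d1 = h1 \<and>
                 hcomp B (id2 B h) \<alpha> = \<beta>) \<and>
       (\<forall>h\<in>hom1 B c y. \<forall>h'\<in>hom1 B c y.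
          \<forall>\<xi>0\<in>hom2 B (comp1 B h d0) (comp1 B h' d0). \<forall>\<xi>1\<in>hom2 B (comp1 B h d1) (comp1 B h' d1).
            vcomp B (hcomp B \<xi>0 (id2 B p)) (hcomp B (id2 B h) \<alpha>) =
              vcomp B (hcomp B (id2 B h') \<alpha>) (hcomp B \<xi>1 (id2 B p)) \<longrightarrow>
            (\<exists>!\<xi>. \<xi> \<in> hom2 B h h' \<and> hcomp B \<xi> (id2 B d0) = \<xi>0 \<and> hcomp B \<xi> (id2 B d1) = \<xi>1)))"

definition pushout2 :: "('o,'a,'c) twocat \<Rightarrow> 'a \<Rightarrow> 'a \<Rightarrow> 'o \<Rightarrow> 'a \<Rightarrow> 'a \<Rightarrow> bool" where
  "pushout2 B f0 f1 P q0 q1 \<longleftrightarrow>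
     f0 \<in> Arr B \<and> f1 \<in> Arr B \<and> src1 B f0 = src1 B f1 \<and> P \<in> Obj B \<and>
     q0 \<in> hom1 B (tgt1 B f0) P \<and> q1 \<in> hom1 B (tgt1 B f1) P \<and>
     comp1 B q0 f0 = comp1 B q1 f1 \<and>
     (\<forall>y\<in>Obj B.
       (\<forall>k0\<in>hom1 B (tgt1 B f0) y. \<forall>k1\<in>hom1 B (tgt1 B f1) y.
          comp1 B k0 f0 = comp1 B k1 f1 \<longrightarrow>
          (\<exists>!k. k \<in> hom1 B P y \<and> comp1 B k q0 = k0 \<and> comp1 B k q1 = k1)) \<and>
       (\<forall>k\<in>hom1 B P y. \<forall>k'\<in>hom1 B P y.
          \<forall>\<xi>0\<in>hom2 B (comp1 B k q0) (comp1 B k' q0). \<forall>\<xi>1\<in>hom2 B (comp1 B k q1) (comp1 B k' q1).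
            hcomp B \<xi>0 (id2 B f0) = hcomp B \<xi>1 (id2 B f1) \<longrightarrow>
            (\<exists>!\<xi>. \<xi> \<in> hom2 B k k' \<and> hcomp B \<xi> (id2 B q0) = \<xi>0 \<and> hcomp B \<xi> (id2 B q1) = \<xi>1)))"

text \<open>The two-dimensional cokernel diagram of p: opcomma object, the 2-pushout
  b\<up>b\<up>b of (\<delta>0,\<delta>1) with D2 \<delta>0 = D0 \<delta>1, and the induced 1-cells D1 and s0
  (which are uniquely determined by the opcomma universal property).\<close>

definition cokernel_diagram :: "('o,'a,'c) twocat \<Rightarrow> 'a \<Rightarrow> 'o \<Rightarrow> 'a \<Rightarrow> 'a \<Rightarrow> 'c \<Rightarrow>
     'o \<Rightarrow> 'a \<Rightarrow> 'a \<Rightarrow> 'a \<Rightarrow> 'a \<Rightarrow> bool" where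
  "cokernel_diagram B p c d0 d1 \<alpha> P D0 D1 D2 s0 \<longleftrightarrow>
     opcomma B p c d0 d1 \<alpha> \<and> pushout2 B d0 d1 P D2 D0 \<and>
     D1 \<in> hom1 B c P \<and> comp1 B D1 d1 = comp1 B D2 d1 \<and> comp1 B D1 d0 = comp1 B D0 d0 \<and>
     hcomp B (id2 B D1) \<alpha> = vcomp B (hcomp B (id2 B D0) \<alpha>) (hcomp B (id2 B D2) \<alpha>) \<and>
     s0 \<in> hom1 B c (tgt1 B p) \<and> comp1 B s0 d0 = id1 B (tgt1 B p) \<and>
     comp1 B s0 d1 = id1 B (tgt1 B p) \<and> hcomp B (id2 B s0) \<alpha> = id2 B p"

definition has_cokernel_diagram :: "('o,'a,'c) twocat \<Rightarrow> 'a \<Rightarrow> bool" where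
  "has_cokernel_diagram B p \<longleftrightarrow> (\<exists>c d0 d1 \<alpha> P D0 D1 D2 s0. cokernel_diagram B p c d0 d1 \<alpha> P D0 D1 D2 s0)"

definition desc_datum :: "('o,'a,'c) twocat \<Rightarrow> 'a \<Rightarrow> 'a \<Rightarrow> 'a \<Rightarrow> 'a \<Rightarrow> 'a \<Rightarrow> 'a \<Rightarrow> 'a \<Rightarrow> 'c \<Rightarrow> bool" where
  "desc_datum B d0 d1 D0 D1 D2 s0 h \<beta> \<longleftrightarrow>
     \<beta> \<in> hom2 B (comp1 B d1 h) (comp1 B d0 h) \<and>
     vcomp B (hcomp B (id2 B D0) \<beta>) (hcomp B (id2 B D2) \<beta>) = hcomp B (id2 B D1) \<beta> \<and>
     hcomp B (id2 B s0) \<beta> = id2 B h"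

definition lax_descent :: "('o,'a,'c) twocat \<Rightarrow> 'a \<Rightarrow> 'a \<Rightarrow> 'a \<Rightarrow> 'a \<Rightarrow> 'a \<Rightarrow> 'a \<Rightarrow> 'a \<Rightarrow>
     'o \<Rightarrow> 'a \<Rightarrow> 'c \<Rightarrow> bool" where
  "lax_descent B p d0 d1 D0 D1 D2 s0 L d \<Psi> \<longleftrightarrow>
     L \<in> Obj B \<and> d \<in> hom1 B L (tgt1 B p) \<and> \<Psi> \<in> hom2 B (comp1 B d1 d) (comp1 B d0 d) \<and>
     (\<forall>y\<in>Obj B.
       (\<forall>h\<in>hom1 B y (tgt1 B p). \<forall>\<beta>. desc_datum B d0 d1 D0 D1 D2 s0 h \<beta> \<longrightarrow>
          (\<exists>!g. g \<in> hom1 B y L \<and> comp1 B d g = h \<and> hcomp B \<Psi> (id2 B g) = \<beta>)) \<and>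
       (\<forall>g\<in>hom1 B y L. \<forall>g'\<in>hom1 B y L. \<forall>\<xi>\<in>hom2 B (comp1 B d g) (comp1 B d g').
          vcomp B (hcomp B \<Psi> (id2 B g')) (hcomp B (id2 B d1) \<xi>) =
            vcomp B (hcomp B (id2 B d0) \<xi>) (hcomp B \<Psi> (id2 B g)) \<longrightarrow>
          (\<exists>!\<zeta>. \<zeta> \<in> hom2 B g g' \<and> hcomp B (id2 B d) \<zeta> = \<xi>)))"

definition effective_faithful :: "('o,'a,'c) twocat \<Rightarrow> 'a \<Rightarrow> bool" where
  "effective_faithful B p \<longleftrightarrow>
     (\<exists>c d0 d1 \<alpha> P D0 D1 D2 s0 L d \<Psi> pH.
        cokernel_diagram B p c d0 d1 \<alpha> P D0 D1 D2 s0 \<and>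
        lax_descent B p d0 d1 D0 D1 D2 s0 L d \<Psi> \<and>
        pH \<in> hom1 B (src1 B p) L \<and> comp1 B d pH = p \<and> hcomp B \<Psi> (id2 B pH) = \<alpha> \<and>
        equivalence1 B pH)"

definition right_kan :: "('o,'a,'c) twocat \<Rightarrow> 'a \<Rightarrow> 'a \<Rightarrow> 'c \<Rightarrow> bool" where
  "right_kan B p t \<gamma> \<longleftrightarrow> p \<in> Arr B \<and> t \<in> hom1 B (tgt1 B p) (tgt1 B p) \<and>
     \<gamma> \<in> hom2 B (comp1 B t p) p \<and>
     (\<forall>k\<in>hom1 B (tgt1 B p) (tgt1 B p).
        bij_betw (\<lambda>\<beta>. vcomp B \<gamma> (hcomp B \<beta> (id2 B p))) (hom2 B k t) (hom2 B (comp1 B k p) p))"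

definition em_object :: "('o,'a,'c) twocat \<Rightarrow> 'o \<Rightarrow> 'a \<Rightarrow> 'c \<Rightarrow> 'c \<Rightarrow> 'o \<Rightarrow> 'a \<Rightarrow> 'c \<Rightarrow> bool" where
  "em_object B b t m \<eta> bT u \<mu> \<longleftrightarrow>
     bT \<in> Obj B \<and> u \<in> hom1 B bT b \<and> \<mu> \<in> hom2 B (comp1 B t u) u \<and>
     (\<forall>y\<in>Obj B.
       (\<forall>h\<in>hom1 B y b. \<forall>\<beta>\<in>hom2 B (comp1 B t h) h.
          vcomp B \<beta> (hcomp B (id2 B t) \<beta>) = vcomp B \<beta> (hcomp B m (id2 B h)) \<and>
          vcomp B \<beta> (hcomp B \<eta> (id2 B h)) = id2 B h \<longrightarrow>
          (\<exists>!g. g \<in> hom1 B y bT \<and> comp1 B u g = h \<and> hcomp B \<mu> (id2 B g) = \<beta>)) \<and>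
       (\<forall>g\<in>hom1 B y bT. \<forall>g'\<in>hom1 B y bT. \<forall>\<xi>\<in>hom2 B (comp1 B u g) (comp1 B u g').
          vcomp B \<xi> (hcomp B \<mu> (id2 B g)) = vcomp B (hcomp B \<mu> (id2 B g')) (hcomp B (id2 B t) \<xi>) \<longrightarrow>
          (\<exists>!\<zeta>. \<zeta> \<in> hom2 B g g' \<and> hcomp B (id2 B u) \<zeta> = \<xi>)))"

definition monadic :: "('o,'a,'c) twocat \<Rightarrow> 'a \<Rightarrow> bool" where
  "monadic B p \<longleftrightarrow>
     (\<exists>t \<gamma> m \<eta> bT u \<mu> pT.
        right_kan B p t \<gamma> \<and>
        m \<in> hom2 B (comp1 B t t) t \<and>
        vcomp B \<gamma> (hcomp B m (id2 B p)) = vcomp B \<gamma> (hcomp B (id2 B t) \<gamma>) \<and>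
        \<eta> \<in> hom2 B (id1 B (tgt1 B p)) t \<and>
        vcomp B \<gamma> (hcomp B \<eta> (id2 B p)) = id2 B p \<and>
        em_object B (tgt1 B p) t m \<eta> bT u \<mu> \<and>
        pT \<in> hom1 B (src1 B p) bT \<and> comp1 B u pT = p \<and> hcomp B \<mu> (id2 B pT) = \<gamma> \<and>
        equivalence1 B pT)"

definition has_kernel_diagram :: "('o,'a,'c) twocat \<Rightarrow> 'a \<Rightarrow> bool" where
  "has_kernel_diagram A l \<longleftrightarrow> has_cokernel_diagram (op2 A) l"

definition effective_op_faithful :: "('o,'a,'c) twocat \<Rightarrow> 'a \<Rightarrow> bool" where
  "effective_op_faithful A l \<longleftrightarrow> effective_faithful (op2 A) l"

definition kleisli_morphism :: "('o,'a,'c) twocat \<Rightarrow> 'a \<Rightarrow> bool" where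
  "kleisli_morphism A l \<longleftrightarrow> monadic (op2 A) l"

definition cokleisli_morphism :: "('o,'a,'c) twocat \<Rightarrow> 'a \<Rightarrow> bool" where
  "cokleisli_morphism A l \<longleftrightarrow> monadic (coop2 A) l"

end

theory Submission
  imports Defs
begin

locale tc =
  fixes B :: "('o,'a,'c) twocat"
  assumes TC: "two_category B"
begin

lemmas TCD = TC[unfolded two_category_def]
lemmas tc1 = TCD[THEN conjunct1]
lemmas tc2 = TCD[THEN conjunct2, THEN conjunct1]
lemmas tc3 = TCD[THEN conjunct2, THEN conjunct2, THEN conjunct1]
lemmas tc4 = TCD[THEN conjunct2, THEN conjunct2, THEN conjunct2, THEN conjunct1]
lemmas tc5 = TCD[THEN conjunct2, THEN conjunct2, THEN conjunct2, THEN conjunct2, THEN conjunct1]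
lemmas tc6 = TCD[THEN conjunct2, THEN conjunct2, THEN conjunct2, THEN conjunct2, THEN conjunct2, THEN conjunct1]
lemmas tc7 = TCD[THEN conjunct2, THEN conjunct2, THEN conjunct2, THEN conjunct2, THEN conjunct2, THEN conjunct2, THEN conjunct1]
lemmas tc8 = TCD[THEN conjunct2, THEN conjunct2, THEN conjunct2, THEN conjunct2, THEN conjunct2, THEN conjunct2, THEN conjunct2, THEN conjunct1]
lemmas tc9 = TCD[THEN conjunct2, THEN conjunct2, THEN conjunct2, THEN conjunct2, THEN conjunct2, THEN conjunct2, THEN conjunct2, THEN conjunct2, THEN conjunct1]
lemmas tc10 = TCD[THEN conjunct2, THEN conjunct2, THEN conjunct2, THEN conjunct2, THEN conjunct2, THEN conjunct2, THEN conjunct2, THEN conjunct2, THEN conjunct2, THEN conjunct1]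
lemmas tc11 = TCD[THEN conjunct2, THEN conjunct2, THEN conjunct2, THEN conjunct2, THEN conjunct2, THEN conjunct2, THEN conjunct2, THEN conjunct2, THEN conjunct2, THEN conjunct2, THEN conjunct1]
lemmas tc12 = TCD[THEN conjunct2, THEN conjunct2, THEN conjunct2, THEN conjunct2, THEN conjunct2, THEN conjunct2, THEN conjunct2, THEN conjunct2, THEN conjunct2, THEN conjunct2, THEN conjunct2, THEN conjunct1]
lemmas tc13 = TCD[THEN conjunct2, THEN conjunct2, THEN conjunct2, THEN conjunct2, THEN conjunct2, THEN conjunct2, THEN conjunct2, THEN conjunct2, THEN conjunct2, THEN conjunct2, THEN conjunct2, THEN conjunct2, THEN conjunct1]
lemmas tc14 = TCD[THEN conjunct2, THEN conjunct2, THEN conjunct2, THEN conjunct2, THEN conjunct2, THEN conjunct2, THEN conjunct2, THEN conjunct2, THEN conjunct2, THEN conjunct2, THEN conjunct2, THEN conjunct2, THEN conjunct2, THEN conjunct1]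
lemmas tc15 = TCD[THEN conjunct2, THEN conjunct2, THEN conjunct2, THEN conjunct2, THEN conjunct2, THEN conjunct2, THEN conjunct2, THEN conjunct2, THEN conjunct2, THEN conjunct2, THEN conjunct2, THEN conjunct2, THEN conjunct2, THEN conjunct2]

lemma obj_src[simp]: "f \<in> Arr B \<Longrightarrow> src1 B f \<in> Obj B"
  and obj_tgt[simp]: "f \<in> Arr B \<Longrightarrow> tgt1 B f \<in> Obj B"
  using tc1 by auto

lemma id1_simps[simp]: "x \<in> Obj B \<Longrightarrow> id1 B x \<in> Arr B"
  "x \<in> Obj B \<Longrightarrow> src1 B (id1 B x) = x" "x \<in> Obj B \<Longrightarrow> tgt1 B (id1 B x) = x"
  using tc2 unfolding hom1_def by auto

lemma comp1_simps[simp]: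
  assumes "f \<in> Arr B" "g \<in> Arr B" "src1 B g = tgt1 B f"
  shows "comp1 B g f \<in> Arr B" "src1 B (comp1 B g f) = src1 B f" "tgt1 B (comp1 B g f) = tgt1 B g"
  using tc3 assms unfolding hom1_def by auto

lemma comp1_assoc[simp]:
  assumes "f \<in> Arr B" "g \<in> Arr B" "h \<in> Arr B" "src1 B h = tgt1 B g" "src1 B g = tgt1 B f"
  shows "comp1 B h (comp1 B g f) = comp1 B (comp1 B h g) f"
  using tc4 assms by auto

lemma comp1_idl[simp]: "f \<in> Arr B \<Longrightarrow> x = tgt1 B f \<Longrightarrow> comp1 B (id1 B x) f = f"
  and comp1_idr[simp]: "f \<in> Arr B \<Longrightarrow> x = src1 B f \<Longrightarrow> comp1 B f (id1 B x) = f"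
  using tc5 by auto

lemma cell_simps[simp]:
  assumes "a \<in> Cell B"
  shows "dom2 B a \<in> Arr B" "cod2 B a \<in> Arr B"
    "src1 B (cod2 B a) = src1 B (dom2 B a)" "tgt1 B (cod2 B a) = tgt1 B (dom2 B a)"
  using tc6 assms by auto

lemma id2_simps[simp]:
  assumes "f \<in> Arr B"
  shows "id2 B f \<in> Cell B" "dom2 B (id2 B f) = f" "cod2 B (id2 B f) = f"
  using tc7 assms unfolding hom2_def by auto

lemma vcomp_simps[simp]:
  assumes "a \<in> Cell B" "b \<in> Cell B" "cod2 B b = dom2 B a"
  shows "vcomp B a b \<in> Cell B" "dom2 B (vcomp B a b) = dom2 B b" "cod2 B (vcomp B a b) = cod2 B a"
  using tc8 assms unfolding hom2_def by auto

lemma vcomp_assoc[simp]: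
  assumes "a \<in> Cell B" "b \<in> Cell B" "c \<in> Cell B" "cod2 B c = dom2 B b" "cod2 B b = dom2 B a"
  shows "vcomp B (vcomp B a b) c = vcomp B a (vcomp B b c)" (is "?lhs = ?rhs")
proof -
  have "\<forall>\<alpha>\<in>Cell B. \<forall>\<beta>\<in>Cell B. \<forall>\<gamma>\<in>Cell B. cod2 B \<gamma> = dom2 B \<beta> \<and> cod2 B \<beta> = dom2 B \<alpha> \<longrightarrow>
        vcomp B \<alpha> (vcomp B \<beta> \<gamma>) = vcomp B (vcomp B \<alpha> \<beta>) \<gamma>"
    using tc9 by blast
  then have "?rhs = ?lhs" using assms by blast
  then show ?thesis by metis
qed

lemma vcomp_idl[simp]: "a \<in> Cell B \<Longrightarrow> f = cod2 B a \<Longrightarrow> vcomp B (id2 B f) a = a"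
  and vcomp_idr[simp]: "a \<in> Cell B \<Longrightarrow> f = dom2 B a \<Longrightarrow> vcomp B a (id2 B f) = a"
  using tc10 by auto

lemma hcomp_simps[simp]:
  assumes "a \<in> Cell B" "b \<in> Cell B" "src1 B (dom2 B a) = tgt1 B (dom2 B b)"
  shows "hcomp B a b \<in> Cell B" "dom2 B (hcomp B a b) = comp1 B (dom2 B a) (dom2 B b)"
    "cod2 B (hcomp B a b) = comp1 B (cod2 B a) (cod2 B b)"
  using tc11 assms unfolding hom2_def by auto

lemma hcomp_assoc[simp]:
  assumes "a \<in> Cell B" "b \<in> Cell B" "c \<in> Cell B" "src1 B (dom2 B a) = tgt1 B (dom2 B b)"
     "src1 B (dom2 B b) = tgt1 B (dom2 B c)"
  shows "hcomp B a (hcomp B b c) = hcomp B (hcomp B a b) c" (is "?rhs = ?lhs")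
proof -
  have "\<forall>\<alpha>\<in>Cell B. \<forall>\<beta>\<in>Cell B. \<forall>\<gamma>\<in>Cell B.
        src1 B (dom2 B \<alpha>) = tgt1 B (dom2 B \<beta>) \<and> src1 B (dom2 B \<beta>) = tgt1 B (dom2 B \<gamma>) \<longrightarrow>
        hcomp B \<alpha> (hcomp B \<beta> \<gamma>) = hcomp B (hcomp B \<alpha> \<beta>) \<gamma>"
    using tc12 by blast
  then have "?rhs = ?lhs" using assms by blast
  then show ?thesis by metis
qed

lemma hcomp_idl[simp]: "a \<in> Cell B \<Longrightarrow> x = tgt1 B (dom2 B a) \<Longrightarrow> hcomp B (id2 B (id1 B x)) a = a"
  and hcomp_idr[simp]: "a \<in> Cell B \<Longrightarrow> x = src1 B (dom2 B a) \<Longrightarrow> hcomp B a (id2 B (id1 B x)) = a"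
  using tc13 by auto

lemma hcomp_id2[simp]: "f \<in> Arr B \<Longrightarrow> g \<in> Arr B \<Longrightarrow> src1 B g = tgt1 B f \<Longrightarrow>
   hcomp B (id2 B g) (id2 B f) = id2 B (comp1 B g f)"
  using tc14 by auto

lemma interchange:
  assumes "a \<in> Cell B" "a' \<in> Cell B" "b \<in> Cell B" "b' \<in> Cell B"
    "cod2 B a = dom2 B a'" "cod2 B b = dom2 B b'" "src1 B (dom2 B a) = tgt1 B (dom2 B b)"
  shows "hcomp B (vcomp B a' a) (vcomp B b' b) = vcomp B (hcomp B a' b') (hcomp B a b)" (is "?rhs = ?lhs")
proof -
  have "\<forall>\<alpha>\<in>Cell B. \<forall>\<alpha>'\<in>Cell B. \<forall>\<beta>\<in>Cell B. \<forall>\<beta>'\<in>Cell B.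
        cod2 B \<alpha> = dom2 B \<alpha>' \<and> cod2 B \<beta> = dom2 B \<beta>' \<and> src1 B (dom2 B \<alpha>) = tgt1 B (dom2 B \<beta>) \<longrightarrow>
        hcomp B (vcomp B \<alpha>' \<alpha>) (vcomp B \<beta>' \<beta>) = vcomp B (hcomp B \<alpha>' \<beta>') (hcomp B \<alpha> \<beta>)"
    using tc15 by blast
  then have "?rhs = ?lhs" using assms by blast
  then show ?thesis by metis
qed

lemma hcomp_split_r[simp]:
  assumes "a \<in> Cell B" "f \<in> Arr B" "g \<in> Arr B" "src1 B g = tgt1 B f" "src1 B (dom2 B a) = tgt1 B g"
  shows "hcomp B a (id2 B (comp1 B g f)) = hcomp B (hcomp B a (id2 B g)) (id2 B f)"
proof -
  have "hcomp B a (id2 B (comp1 B g f)) = hcomp B a (hcomp B (id2 B g) (id2 B f))"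
    using assms by (simp only: hcomp_id2)
  also have "\<dots> = hcomp B (hcomp B a (id2 B g)) (id2 B f)"
    using assms by (intro hcomp_assoc) auto
  finally show ?thesis .
qed

lemma whisk_l_vcomp[simp]:
  assumes "a \<in> Cell B" "b \<in> Cell B" "cod2 B b = dom2 B a" "f \<in> Arr B" "src1 B f = tgt1 B (dom2 B a)"
  shows "hcomp B (id2 B f) (vcomp B a b) = vcomp B (hcomp B (id2 B f) a) (hcomp B (id2 B f) b)"
proof -
  have [simp]: "tgt1 B (dom2 B b) = tgt1 B (dom2 B a)" using cell_simps(4)[OF assms(2)] assms(3) by (simp only:)
  have "hcomp B (id2 B f) (vcomp B a b) = hcomp B (vcomp B (id2 B f) (id2 B f)) (vcomp B a b)"
    using assms by simp
  also have "\<dots> = vcomp B (hcomp B (id2 B f) a) (hcomp B (id2 B f) b)"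
    using assms by (subst interchange) auto
  finally show ?thesis .
qed

lemma whisk_r_vcomp[simp]:
  assumes "a \<in> Cell B" "b \<in> Cell B" "cod2 B b = dom2 B a" "f \<in> Arr B" "tgt1 B f = src1 B (dom2 B a)"
  shows "hcomp B (vcomp B a b) (id2 B f) = vcomp B (hcomp B a (id2 B f)) (hcomp B b (id2 B f))"
proof -
  have [simp]: "src1 B (dom2 B b) = src1 B (dom2 B a)" using cell_simps(3)[OF assms(2)] assms(3) by (simp only:)
  have "hcomp B (vcomp B a b) (id2 B f) = hcomp B (vcomp B a b) (vcomp B (id2 B f) (id2 B f))"
    using assms by simp
  also have "\<dots> = vcomp B (hcomp B a (id2 B f)) (hcomp B b (id2 B f))"
    using assms by (subst interchange) auto
  finally show ?thesis .
qed

lemma natural: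
  assumes "a \<in> Cell B" "b \<in> Cell B" "src1 B (dom2 B a) = tgt1 B (dom2 B b)"
  shows "vcomp B (hcomp B a (id2 B (cod2 B b))) (hcomp B (id2 B (dom2 B a)) b) =
         vcomp B (hcomp B (id2 B (cod2 B a)) b) (hcomp B a (id2 B (dom2 B b)))"
proof -
  have "vcomp B (hcomp B a (id2 B (cod2 B b))) (hcomp B (id2 B (dom2 B a)) b) = hcomp B a b"
    using assms by (subst interchange[symmetric]) auto
  moreover have "vcomp B (hcomp B (id2 B (cod2 B a)) b) (hcomp B a (id2 B (dom2 B b))) = hcomp B a b"
    using assms by (subst interchange[symmetric]) auto
  ultimately show ?thesis by simp
qed

lemma hom2_iff: "a \<in> hom2 B f g \<longleftrightarrow> a \<in> Cell B \<and> dom2 B a = f \<and> cod2 B a = g"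
  by (simp add: hom2_def)
lemma hom1_iff: "f \<in> hom1 B x y \<longleftrightarrow> f \<in> Arr B \<and> src1 B f = x \<and> tgt1 B f = y"
  by (simp add: hom1_def)

end

context tc
begin

lemma c1_var:
  assumes "comp1 B g f = k" "f \<in> Arr B" "g \<in> Arr B" "X \<in> Arr B" "src1 B g = tgt1 B f" "src1 B X = tgt1 B g"
  shows "comp1 B (comp1 B X g) f = comp1 B X k"
  using assms by (simp flip: comp1_assoc)

lemma lw_var:
  assumes "hcomp B (id2 B g) a = b" "a \<in> Cell B" "g \<in> Arr B" "X \<in> Arr B" "src1 B g = tgt1 B (dom2 B a)" "src1 B X = tgt1 B g"
  shows "hcomp B (id2 B (comp1 B X g)) a = hcomp B (id2 B X) b"
proof -
  have "hcomp B (id2 B (comp1 B X g)) a = hcomp B (hcomp B (id2 B X) (id2 B g)) a"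
    using assms by simp
  also have "\<dots> = hcomp B (id2 B X) (hcomp B (id2 B g) a)"
    using assms by (subst hcomp_assoc) auto
  finally show ?thesis using assms by simp
qed

lemma rw_var:
  assumes "hcomp B a (id2 B g) = b" "a \<in> Cell B" "g \<in> Arr B" "X \<in> Arr B" "src1 B (dom2 B a) = tgt1 B g" "src1 B X = tgt1 B (dom2 B a)"
  shows "hcomp B (hcomp B (id2 B X) a) (id2 B g) = hcomp B (id2 B X) b"
proof -
  have "hcomp B (hcomp B (id2 B X) a) (id2 B g) = hcomp B (id2 B X) (hcomp B a (id2 B g))"
    using assms by (subst hcomp_assoc) auto
  then show ?thesis using assms by simp
qed

lemma rr_var:
  assumes "comp1 B g f = k" "a \<in> Cell B" "f \<in> Arr B" "g \<in> Arr B" "src1 B g = tgt1 B f" "src1 B (dom2 B a) = tgt1 B g"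
  shows "hcomp B (hcomp B a (id2 B g)) (id2 B f) = hcomp B a (id2 B k)"
proof -
  have "hcomp B (hcomp B a (id2 B g)) (id2 B f) = hcomp B a (hcomp B (id2 B g) (id2 B f))"
    using assms by (subst hcomp_assoc) auto
  then show ?thesis using assms by simp
qed

lemma vc_var:
  assumes "vcomp B a b = c" "a \<in> Cell B" "b \<in> Cell B" "z \<in> Cell B" "cod2 B b = dom2 B a" "cod2 B z = dom2 B b"
  shows "vcomp B a (vcomp B b z) = vcomp B c z"
  using assms by (simp flip: vcomp_assoc)

lemma opc_1:
  assumes "opcomma B p c d0 d1 al" "y \<in> Obj B" "h0 \<in> hom1 B (tgt1 B p) y" "h1 \<in> hom1 B (tgt1 B p) y"
    "\<beta> \<in> hom2 B (comp1 B h1 p) (comp1 B h0 p)"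
  shows "\<exists>!h. h \<in> hom1 B c y \<and> comp1 B h d0 = h0 \<and> comp1 B h d1 = h1 \<and> hcomp B (id2 B h) al = \<beta>"
  using assms unfolding opcomma_def by blast

lemma opc_2:
  assumes "opcomma B p c d0 d1 al" "y \<in> Obj B" "h \<in> hom1 B c y" "h' \<in> hom1 B c y"
    "\<xi>0 \<in> hom2 B (comp1 B h d0) (comp1 B h' d0)" "\<xi>1 \<in> hom2 B (comp1 B h d1) (comp1 B h' d1)"
    "vcomp B (hcomp B \<xi>0 (id2 B p)) (hcomp B (id2 B h) al) = vcomp B (hcomp B (id2 B h') al) (hcomp B \<xi>1 (id2 B p))"
  shows "\<exists>!\<xi>. \<xi> \<in> hom2 B h h' \<and> hcomp B \<xi> (id2 B d0) = \<xi>0 \<and> hcomp B \<xi> (id2 B d1) = \<xi>1"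
  using assms unfolding opcomma_def by blast

lemma po_1:
  assumes "pushout2 B f0 f1 P q0 q1" "y \<in> Obj B" "k0 \<in> hom1 B (tgt1 B f0) y" "k1 \<in> hom1 B (tgt1 B f1) y"
     "comp1 B k0 f0 = comp1 B k1 f1"
  shows "\<exists>!k. k \<in> hom1 B P y \<and> comp1 B k q0 = k0 \<and> comp1 B k q1 = k1"
  using assms unfolding pushout2_def by blast

lemma po_2:
  assumes "pushout2 B f0 f1 P q0 q1" "y \<in> Obj B" "k \<in> hom1 B P y" "k' \<in> hom1 B P y"
    "\<xi>0 \<in> hom2 B (comp1 B k q0) (comp1 B k' q0)" "\<xi>1 \<in> hom2 B (comp1 B k q1) (comp1 B k' q1)"
    "hcomp B \<xi>0 (id2 B f0) = hcomp B \<xi>1 (id2 B f1)"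
  shows "\<exists>!\<xi>. \<xi> \<in> hom2 B k k' \<and> hcomp B \<xi> (id2 B q0) = \<xi>0 \<and> hcomp B \<xi> (id2 B q1) = \<xi>1"
  using assms unfolding pushout2_def by blast

end

locale core = tc +
  fixes p c d0 d1 al P D0 D1 D2 s0 t ga et m k
  assumes cok: "cokernel_diagram B p c d0 d1 al P D0 D1 D2 s0"
  and t_h: "t \<in> hom1 B (tgt1 B p) (tgt1 B p)"
  and ga_h: "ga \<in> hom2 B (comp1 B t p) p"
  and et_h: "et \<in> hom2 B (id1 B (tgt1 B p)) t"
  and et_unit: "vcomp B ga (hcomp B et (id2 B p)) = id2 B p"
  and m_h: "m \<in> hom2 B (comp1 B t t) t"
  and m_ass: "vcomp B ga (hcomp B m (id2 B p)) = vcomp B ga (hcomp B (id2 B t) ga)"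
  and k_h: "k \<in> hom2 B d1 (comp1 B d0 t)"
  and k_prop: "vcomp B (hcomp B (id2 B d0) ga) (hcomp B k (id2 B p)) = al"
  and kan_inj: "\<And>x y. x \<in> hom2 B t t \<Longrightarrow> y \<in> hom2 B t t \<Longrightarrow>
      vcomp B ga (hcomp B x (id2 B p)) = vcomp B ga (hcomp B y (id2 B p)) \<Longrightarrow> x = y"
begin

lemma opc: "opcomma B p c d0 d1 al" and po: "pushout2 B d0 d1 P D2 D0"
  using cok unfolding cokernel_diagram_def by auto

lemma basic[simp]:
  "p \<in> Arr B" "c \<in> Obj B" "d0 \<in> Arr B" "src1 B d0 = tgt1 B p" "tgt1 B d0 = c"
  "d1 \<in> Arr B" "src1 B d1 = tgt1 B p" "tgt1 B d1 = c"
  "al \<in> Cell B" "dom2 B al = comp1 B d1 p" "cod2 B al = comp1 B d0 p"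
  "P \<in> Obj B" "D2 \<in> Arr B" "src1 B D2 = c" "tgt1 B D2 = P"
  "D0 \<in> Arr B" "src1 B D0 = c" "tgt1 B D0 = P"
  "D1 \<in> Arr B" "src1 B D1 = c" "tgt1 B D1 = P"
  "s0 \<in> Arr B" "src1 B s0 = c" "tgt1 B s0 = tgt1 B p"
  "t \<in> Arr B" "src1 B t = tgt1 B p" "tgt1 B t = tgt1 B p"
  "ga \<in> Cell B" "dom2 B ga = comp1 B t p" "cod2 B ga = p"
  "et \<in> Cell B" "dom2 B et = id1 B (tgt1 B p)" "cod2 B et = t"
  "m \<in> Cell B" "dom2 B m = comp1 B t t" "cod2 B m = t"
  "k \<in> Cell B" "dom2 B k = d1" "cod2 B k = comp1 B d0 t"
  using cok t_h ga_h et_h m_h k_h unfolding cokernel_diagram_def opcomma_def pushout2_def hom1_def hom2_def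
  by auto

lemma cokfacts[simp]:
  "comp1 B D2 d0 = comp1 B D0 d1"
  "comp1 B D1 d1 = comp1 B D2 d1" "comp1 B D1 d0 = comp1 B D0 d0"
  "hcomp B (id2 B D1) al = vcomp B (hcomp B (id2 B D0) al) (hcomp B (id2 B D2) al)"
  "comp1 B s0 d0 = id1 B (tgt1 B p)" "comp1 B s0 d1 = id1 B (tgt1 B p)"
  "hcomp B (id2 B s0) al = id2 B p"
  using cok unfolding cokernel_diagram_def pushout2_def by auto

lemmas cokvars[simp] = c1_var[OF cokfacts(1)] c1_var[OF cokfacts(2)] c1_var[OF cokfacts(3)]
  rr_var[OF cokfacts(1)] rr_var[OF cokfacts(2)] rr_var[OF cokfacts(3)]
  rr_var[OF cokfacts(5)] rr_var[OF cokfacts(6)]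
  lw_var[OF cokfacts(4)] c1_var[OF cokfacts(5)] c1_var[OF cokfacts(6)] lw_var[OF cokfacts(7)]
  vc_var[OF et_unit] vc_var[OF m_ass] vc_var[OF k_prop]

declare et_unit[simp] k_prop[simp] m_ass[simp]

definition "r = (THE h. h \<in> hom1 B c (tgt1 B p) \<and> comp1 B h d0 = id1 B (tgt1 B p) \<and> comp1 B h d1 = t \<and> hcomp B (id2 B h) al = ga)"

lemma r_ex: "r \<in> hom1 B c (tgt1 B p) \<and> comp1 B r d0 = id1 B (tgt1 B p) \<and> comp1 B r d1 = t \<and> hcomp B (id2 B r) al = ga"
  unfolding r_def
  by (rule theI', rule opc_1[OF opc]) (auto simp: hom1_iff hom2_iff)

lemma r_facts[simp]: "r \<in> Arr B" "src1 B r = c" "tgt1 B r = tgt1 B p"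
  "comp1 B r d0 = id1 B (tgt1 B p)" "comp1 B r d1 = t" "hcomp B (id2 B r) al = ga"
  using r_ex by (auto simp: hom1_iff)

lemmas r_vars[simp] = c1_var[OF r_facts(4)] c1_var[OF r_facts(5)] lw_var[OF r_facts(6)]
  rr_var[OF r_facts(4)] rr_var[OF r_facts(5)]

definition "kap = (THE x. x \<in> hom2 B (id1 B c) (comp1 B d0 r) \<and> hcomp B x (id2 B d0) = id2 B d0 \<and> hcomp B x (id2 B d1) = k)"

lemma kap_ex: "kap \<in> hom2 B (id1 B c) (comp1 B d0 r) \<and> hcomp B kap (id2 B d0) = id2 B d0 \<and> hcomp B kap (id2 B d1) = k"
  unfolding kap_def
  apply (rule theI')
  apply (rule opc_2[OF opc, of c "id1 B c" "comp1 B d0 r"])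
  apply (auto simp: hom1_iff hom2_iff)
  done

lemma kap_facts[simp]: "kap \<in> Cell B" "dom2 B kap = id1 B c" "cod2 B kap = comp1 B d0 r"
  "hcomp B kap (id2 B d0) = id2 B d0" "hcomp B kap (id2 B d1) = k"
  using kap_ex by (auto simp: hom2_iff)

lemmas kap_vars[simp] = rw_var[OF kap_facts(4)] rw_var[OF kap_facts(5)]

lemma decomp:
  assumes "h \<in> Arr B" "tgt1 B h = tgt1 B p" "h' \<in> Arr B" "tgt1 B h' = tgt1 B p"
    "be \<in> hom2 B (comp1 B d1 h) (comp1 B d0 h')"
  shows "be = vcomp B (hcomp B (id2 B (comp1 B d0 r)) be) (hcomp B k (id2 B h))"
  using natural[of kap be] assms by (simp add: hom2_iff)

lemma rk[simp]: "hcomp B (id2 B r) k = id2 B t"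
proof (rule kan_inj)
  show "hcomp B (id2 B r) k \<in> hom2 B t t" by (simp add: hom2_iff)
  show "id2 B t \<in> hom2 B t t" by (simp add: hom2_iff)
  have "ga = hcomp B (id2 B r) (vcomp B (hcomp B (id2 B d0) ga) (hcomp B k (id2 B p)))"
    by simp
  also have "\<dots> = vcomp B ga (hcomp B (hcomp B (id2 B r) k) (id2 B p))"
    by (simp del: k_prop)
  finally show "vcomp B ga (hcomp B (hcomp B (id2 B r) k) (id2 B p)) = vcomp B ga (hcomp B (id2 B t) (id2 B p))"
    by simp
qed

lemmas rk_var[simp] = lw_var[OF rk]

lemma r_Phi:
  assumes "h \<in> Arr B" "tgt1 B h = tgt1 B p" "a \<in> hom2 B (comp1 B t h) h'"
  shows "hcomp B (id2 B r) (vcomp B (hcomp B (id2 B d0) a) (hcomp B k (id2 B h))) = a"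
  using assms by (simp add: hom2_iff)

definition "lam = (THE x. x \<in> hom2 B s0 r \<and> hcomp B x (id2 B d0) = id2 B (id1 B (tgt1 B p)) \<and> hcomp B x (id2 B d1) = et)"

lemma lam_ex: "lam \<in> hom2 B s0 r \<and> hcomp B lam (id2 B d0) = id2 B (id1 B (tgt1 B p)) \<and> hcomp B lam (id2 B d1) = et"
  unfolding lam_def
  apply (rule theI')
  apply (rule opc_2[OF opc, of "tgt1 B p" s0 r])
  apply (auto simp: hom1_iff hom2_iff)
  done

lemma lam_facts[simp]: "lam \<in> Cell B" "dom2 B lam = s0" "cod2 B lam = r"
  "hcomp B lam (id2 B d0) = id2 B (id1 B (tgt1 B p))" "hcomp B lam (id2 B d1) = et"
  using lam_ex by (auto simp: hom2_iff)

lemmas lam_vars[simp] = rw_var[OF lam_facts(4)] rw_var[OF lam_facts(5)]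

lemma unit_rel:
  assumes "h \<in> Arr B" "tgt1 B h = tgt1 B p" "be \<in> hom2 B (comp1 B d1 h) (comp1 B d0 h')"
     "h' \<in> Arr B" "tgt1 B h' = tgt1 B p"
  shows "hcomp B (id2 B s0) be = vcomp B (hcomp B (id2 B r) be) (hcomp B et (id2 B h))"
  using natural[of lam be] assms by (simp add: hom2_iff)

definition "R = (THE x. x \<in> hom1 B P (tgt1 B p) \<and> comp1 B x D2 = comp1 B t r \<and> comp1 B x D0 = r)"

lemma R_ex: "R \<in> hom1 B P (tgt1 B p) \<and> comp1 B R D2 = comp1 B t r \<and> comp1 B R D0 = r"
  unfolding R_def
  apply (rule theI')
  apply (rule po_1[OF po])
  apply (auto simp: hom1_iff hom2_iff)
  done

lemma R_facts[simp]: "R \<in> Arr B" "src1 B R = P" "tgt1 B R = tgt1 B p"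
  "comp1 B R D2 = comp1 B t r" "comp1 B R D0 = r"
  using R_ex by (auto simp: hom1_iff)

lemmas R_vars[simp] = c1_var[OF R_facts(4)] c1_var[OF R_facts(5)] rr_var[OF R_facts(4)] rr_var[OF R_facts(5)]

definition "nu = (THE x. x \<in> hom2 B (comp1 B R D1) r \<and> hcomp B x (id2 B d0) = id2 B (id1 B (tgt1 B p)) \<and> hcomp B x (id2 B d1) = m)"

lemma nu_ex: "nu \<in> hom2 B (comp1 B R D1) r \<and> hcomp B nu (id2 B d0) = id2 B (id1 B (tgt1 B p)) \<and> hcomp B nu (id2 B d1) = m"
  unfolding nu_def
  apply (rule theI')
  apply (rule opc_2[OF opc, of "tgt1 B p" "comp1 B R D1" r])
  apply (auto simp: hom1_iff hom2_iff)
  done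

lemma nu_facts[simp]: "nu \<in> Cell B" "dom2 B nu = comp1 B R D1" "cod2 B nu = r"
  "hcomp B nu (id2 B d0) = id2 B (id1 B (tgt1 B p))" "hcomp B nu (id2 B d1) = m"
  using nu_ex by (auto simp: hom2_iff)

lemmas nu_vars[simp] = rw_var[OF nu_facts(4)] rw_var[OF nu_facts(5)]

lemma mult_rel:
  assumes "h \<in> Arr B" "tgt1 B h = tgt1 B p" "be \<in> hom2 B (comp1 B d1 h) (comp1 B d0 h')"
     "h' \<in> Arr B" "tgt1 B h' = tgt1 B p"
  shows "hcomp B (id2 B (comp1 B R D1)) be = vcomp B (hcomp B (id2 B r) be) (hcomp B m (id2 B h))"
  using natural[of nu be] assms by (simp add: hom2_iff)

definition "K = (THE x. x \<in> hom2 B (id1 B P) (comp1 B (comp1 B D0 d0) R) \<and>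
   hcomp B x (id2 B D2) = vcomp B (hcomp B (hcomp B (id2 B D0) k) (id2 B r)) (hcomp B (id2 B D2) kap) \<and>
   hcomp B x (id2 B D0) = hcomp B (id2 B D0) kap)"

lemma K_ex: "K \<in> hom2 B (id1 B P) (comp1 B (comp1 B D0 d0) R) \<and>
   hcomp B K (id2 B D2) = vcomp B (hcomp B (hcomp B (id2 B D0) k) (id2 B r)) (hcomp B (id2 B D2) kap) \<and>
   hcomp B K (id2 B D0) = hcomp B (id2 B D0) kap"
  unfolding K_def
  apply (rule theI')
  apply (rule po_2[OF po, of P "id1 B P" "comp1 B (comp1 B D0 d0) R"])
  apply (auto simp: hom1_iff hom2_iff)
  done

lemma K_facts[simp]: "K \<in> Cell B" "dom2 B K = id1 B P" "cod2 B K = comp1 B (comp1 B D0 d0) R"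
  "hcomp B K (id2 B D2) = vcomp B (hcomp B (hcomp B (id2 B D0) k) (id2 B r)) (hcomp B (id2 B D2) kap)"
  "hcomp B K (id2 B D0) = hcomp B (id2 B D0) kap"
  using K_ex by (auto simp: hom2_iff)

lemmas K_vars[simp] = rw_var[OF K_facts(4)] rw_var[OF K_facts(5)]

lemma K_inj:
  assumes "h \<in> Arr B" "tgt1 B h = tgt1 B p"
    "g1 \<in> hom2 B (comp1 B (comp1 B D2 d1) h) (comp1 B (comp1 B D0 d0) h)"
    "g2 \<in> hom2 B (comp1 B (comp1 B D2 d1) h) (comp1 B (comp1 B D0 d0) h)"
    "hcomp B (id2 B R) g1 = hcomp B (id2 B R) g2"
  shows "g1 = g2"
proof -
  have e1: "g1 = vcomp B (hcomp B (id2 B (comp1 B (comp1 B D0 d0) R)) g1) (hcomp B K (id2 B (comp1 B (comp1 B D2 d1) h)))"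
    using natural[of K g1] assms by (simp add: hom2_iff)
  have e2: "g2 = vcomp B (hcomp B (id2 B (comp1 B (comp1 B D0 d0) R)) g2) (hcomp B K (id2 B (comp1 B (comp1 B D2 d1) h)))"
    using natural[of K g2] assms by (simp add: hom2_iff)
  have "hcomp B (id2 B (comp1 B (comp1 B D0 d0) R)) g1 = hcomp B (id2 B (comp1 B D0 d0)) (hcomp B (id2 B R) g1)"
    using assms(1-4) by (simp add: hom2_iff)
  also have "\<dots> = hcomp B (id2 B (comp1 B D0 d0)) (hcomp B (id2 B R) g2)" using assms(5) by (simp only:)
  also have "\<dots> = hcomp B (id2 B (comp1 B (comp1 B D0 d0) R)) g2"
    using assms(1-4) by (simp add: hom2_iff)
  finally show ?thesis using e1 e2 by metis
qed

lemma r_inj: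
  assumes "h \<in> Arr B" "tgt1 B h = tgt1 B p" "h' \<in> Arr B" "tgt1 B h' = tgt1 B p"
    "g1 \<in> hom2 B (comp1 B d1 h) (comp1 B d0 h')"
    "g2 \<in> hom2 B (comp1 B d1 h) (comp1 B d0 h')"
    "hcomp B (id2 B r) g1 = hcomp B (id2 B r) g2"
  shows "g1 = g2"
proof -
  have e1: "g1 = vcomp B (hcomp B (id2 B (comp1 B d0 r)) g1) (hcomp B k (id2 B h))"
    using decomp assms by blast
  have e2: "g2 = vcomp B (hcomp B (id2 B (comp1 B d0 r)) g2) (hcomp B k (id2 B h))"
    using decomp assms by blast
  have "hcomp B (id2 B (comp1 B d0 r)) g1 = hcomp B (id2 B d0) (hcomp B (id2 B r) g1)"
    using assms(1-6) by (simp add: hom2_iff)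
  also have "\<dots> = hcomp B (id2 B d0) (hcomp B (id2 B r) g2)" using assms(7) by (simp only:)
  also have "\<dots> = hcomp B (id2 B (comp1 B d0 r)) g2"
    using assms(1-6) by (simp add: hom2_iff)
  finally show ?thesis using e1 e2 by metis
qed

lemma desc_to_alg:
  assumes "h \<in> Arr B" "tgt1 B h = tgt1 B p"
    "desc_datum B d0 d1 D0 D1 D2 s0 h be"
  shows "hcomp B (id2 B r) be \<in> hom2 B (comp1 B t h) h"
    "vcomp B (hcomp B (id2 B r) be) (hcomp B (id2 B t) (hcomp B (id2 B r) be)) =
     vcomp B (hcomp B (id2 B r) be) (hcomp B m (id2 B h))"
    "vcomp B (hcomp B (id2 B r) be) (hcomp B et (id2 B h)) = id2 B h"
proof -
  have bh: "be \<in> hom2 B (comp1 B d1 h) (comp1 B d0 h)"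
   and coc: "vcomp B (hcomp B (id2 B D0) be) (hcomp B (id2 B D2) be) = hcomp B (id2 B D1) be"
   and un: "hcomp B (id2 B s0) be = id2 B h"
    using assms(3) unfolding desc_datum_def by auto
  show "hcomp B (id2 B r) be \<in> hom2 B (comp1 B t h) h"
    using bh assms by (simp add: hom2_iff)
  show "vcomp B (hcomp B (id2 B r) be) (hcomp B et (id2 B h)) = id2 B h"
    using unit_rel[OF assms(1,2) bh assms(1,2)] un by simp
  have "hcomp B (id2 B R) (vcomp B (hcomp B (id2 B D0) be) (hcomp B (id2 B D2) be)) =
        hcomp B (id2 B R) (hcomp B (id2 B D1) be)" using coc by simp
  also have "hcomp B (id2 B R) (hcomp B (id2 B D1) be) = vcomp B (hcomp B (id2 B r) be) (hcomp B m (id2 B h))"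
    using mult_rel[OF assms(1,2) bh assms(1,2)] bh assms by (simp add: hom2_iff)
  finally show "vcomp B (hcomp B (id2 B r) be) (hcomp B (id2 B t) (hcomp B (id2 B r) be)) =
     vcomp B (hcomp B (id2 B r) be) (hcomp B m (id2 B h))"
    using bh assms by (simp add: hom2_iff)
qed

lemma alg_to_desc:
  assumes "h \<in> Arr B" "tgt1 B h = tgt1 B p" "a \<in> hom2 B (comp1 B t h) h"
    "vcomp B a (hcomp B (id2 B t) a) = vcomp B a (hcomp B m (id2 B h))"
    "vcomp B a (hcomp B et (id2 B h)) = id2 B h"
  shows "desc_datum B d0 d1 D0 D1 D2 s0 h (vcomp B (hcomp B (id2 B d0) a) (hcomp B k (id2 B h)))"
proof -
  define be where "be = vcomp B (hcomp B (id2 B d0) a) (hcomp B k (id2 B h))"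
  have bh: "be \<in> hom2 B (comp1 B d1 h) (comp1 B d0 h)"
    using assms unfolding be_def by (simp add: hom2_iff)
  have rb: "hcomp B (id2 B r) be = a" unfolding be_def using r_Phi assms by blast
  have un: "hcomp B (id2 B s0) be = id2 B h"
    using unit_rel[OF assms(1,2) bh assms(1,2)] rb assms(5) by simp
  have coc: "vcomp B (hcomp B (id2 B D0) be) (hcomp B (id2 B D2) be) = hcomp B (id2 B D1) be"
  proof (rule K_inj[OF assms(1,2)])
    show "vcomp B (hcomp B (id2 B D0) be) (hcomp B (id2 B D2) be) \<in> hom2 B (comp1 B (comp1 B D2 d1) h) (comp1 B (comp1 B D0 d0) h)"
      using bh assms by (simp add: hom2_iff)
    show "hcomp B (id2 B D1) be \<in> hom2 B (comp1 B (comp1 B D2 d1) h) (comp1 B (comp1 B D0 d0) h)"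
      using bh assms by (simp add: hom2_iff)
    have "hcomp B (id2 B R) (vcomp B (hcomp B (id2 B D0) be) (hcomp B (id2 B D2) be)) =
          vcomp B (hcomp B (id2 B r) be) (hcomp B (id2 B t) (hcomp B (id2 B r) be))"
      using bh assms by (simp add: hom2_iff)
    also have "\<dots> = vcomp B (hcomp B (id2 B r) be) (hcomp B m (id2 B h))"
      using rb assms(4) by simp
    also have "\<dots> = hcomp B (id2 B R) (hcomp B (id2 B D1) be)"
      using mult_rel[OF assms(1,2) bh assms(1,2)] bh assms by (simp add: hom2_iff)
    finally show "hcomp B (id2 B R) (vcomp B (hcomp B (id2 B D0) be) (hcomp B (id2 B D2) be)) =
          hcomp B (id2 B R) (hcomp B (id2 B D1) be)" .
  qed
  show ?thesis using bh un coc unfolding desc_datum_def be_def[symmetric] by auto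
qed

lemma mor_fwd:
  assumes "h \<in> Arr B" "tgt1 B h = tgt1 B p" "h' \<in> Arr B" "tgt1 B h' = tgt1 B p"
    "be \<in> hom2 B (comp1 B d1 h) (comp1 B d0 h)" "be' \<in> hom2 B (comp1 B d1 h') (comp1 B d0 h')"
    "xi \<in> hom2 B h h'"
    "vcomp B be' (hcomp B (id2 B d1) xi) = vcomp B (hcomp B (id2 B d0) xi) be"
  shows "vcomp B (hcomp B (id2 B r) be') (hcomp B (id2 B t) xi) = vcomp B xi (hcomp B (id2 B r) be)"
proof -
  have "hcomp B (id2 B r) (vcomp B be' (hcomp B (id2 B d1) xi)) = hcomp B (id2 B r) (vcomp B (hcomp B (id2 B d0) xi) be)"
    using assms(8) by simp
  then show ?thesis using assms(1-7) by (simp add: hom2_iff)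
qed

lemma mor_bwd:
  assumes "h \<in> Arr B" "tgt1 B h = tgt1 B p" "h' \<in> Arr B" "tgt1 B h' = tgt1 B p"
    "be \<in> hom2 B (comp1 B d1 h) (comp1 B d0 h)" "be' \<in> hom2 B (comp1 B d1 h') (comp1 B d0 h')"
    "xi \<in> hom2 B h h'"
    "vcomp B (hcomp B (id2 B r) be') (hcomp B (id2 B t) xi) = vcomp B xi (hcomp B (id2 B r) be)"
  shows "vcomp B be' (hcomp B (id2 B d1) xi) = vcomp B (hcomp B (id2 B d0) xi) be"
proof (rule r_inj[OF assms(1-4)])
  show "vcomp B be' (hcomp B (id2 B d1) xi) \<in> hom2 B (comp1 B d1 h) (comp1 B d0 h')"
    using assms by (simp add: hom2_iff)
  show "vcomp B (hcomp B (id2 B d0) xi) be \<in> hom2 B (comp1 B d1 h) (comp1 B d0 h')"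
    using assms by (simp add: hom2_iff)
  show "hcomp B (id2 B r) (vcomp B be' (hcomp B (id2 B d1) xi)) = hcomp B (id2 B r) (vcomp B (hcomp B (id2 B d0) xi) be)"
    using assms by (simp add: hom2_iff)
qed

end

locale adjn = tc +
  fixes f p et ep
  assumes adj: "adjunction B f p et ep"
begin

lemma adj_basic[simp]: "f \<in> Arr B" "p \<in> Arr B" "src1 B f = tgt1 B p" "tgt1 B f = src1 B p"
  "et \<in> Cell B" "dom2 B et = id1 B (tgt1 B p)" "cod2 B et = comp1 B p f"
  "ep \<in> Cell B" "dom2 B ep = comp1 B f p" "cod2 B ep = id1 B (src1 B p)"
  using adj unfolding adjunction_def hom1_def hom2_def by auto

lemma tri1[simp]: "vcomp B (hcomp B ep (id2 B f)) (hcomp B (id2 B f) et) = id2 B f"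
  and tri2[simp]: "vcomp B (hcomp B (id2 B p) ep) (hcomp B et (id2 B p)) = id2 B p"
  using adj unfolding adjunction_def by auto

lemma tri1_l[simp]:
  assumes "X \<in> Arr B" "src1 B X = src1 B p"
  shows "vcomp B (hcomp B (hcomp B (id2 B X) ep) (id2 B f)) (hcomp B (id2 B (comp1 B X f)) et) = id2 B (comp1 B X f)"
proof -
  have "hcomp B (id2 B X) (vcomp B (hcomp B ep (id2 B f)) (hcomp B (id2 B f) et)) =
        vcomp B (hcomp B (hcomp B (id2 B X) ep) (id2 B f)) (hcomp B (id2 B (comp1 B X f)) et)"
    using assms by (simp del: tri1)
  then show ?thesis using assms by simp
qed

lemma tri2_l[simp]:
  assumes "X \<in> Arr B" "src1 B X = tgt1 B p"
  shows "vcomp B (hcomp B (id2 B (comp1 B X p)) ep) (hcomp B (hcomp B (id2 B X) et) (id2 B p)) = id2 B (comp1 B X p)"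
proof -
  have "hcomp B (id2 B X) (vcomp B (hcomp B (id2 B p) ep) (hcomp B et (id2 B p))) =
        vcomp B (hcomp B (id2 B (comp1 B X p)) ep) (hcomp B (hcomp B (id2 B X) et) (id2 B p))"
    using assms by (simp del: tri2)
  then show ?thesis using assms by simp
qed

lemmas tri_vars[simp] = vc_var[OF tri1] vc_var[OF tri2] vc_var[OF tri1_l] vc_var[OF tri2_l]

lemma ep_nat: "vcomp B ep (hcomp B (hcomp B ep (id2 B f)) (id2 B p)) = vcomp B ep (hcomp B (id2 B (comp1 B f p)) ep)"
  using natural[of ep ep] by simp

lemma kanA_1:
  assumes "k' \<in> hom1 B (tgt1 B p) (tgt1 B p)" "x \<in> hom2 B k' (comp1 B p f)"
  shows "x = vcomp B (hcomp B (vcomp B (hcomp B (id2 B p) ep) (hcomp B x (id2 B p))) (id2 B f)) (hcomp B (id2 B k') et)"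
proof -
  have n: "vcomp B (hcomp B (hcomp B x (id2 B p)) (id2 B f)) (hcomp B (id2 B k') et) =
           vcomp B (hcomp B (id2 B (comp1 B p f)) et) x"
    using natural[of x et] assms by (simp add: hom1_iff hom2_iff)
  show ?thesis using assms n by (simp add: hom1_iff hom2_iff)
qed

lemma kanA_2:
  assumes "k' \<in> hom1 B (tgt1 B p) (tgt1 B p)" "s \<in> hom2 B (comp1 B k' p) p"
  shows "vcomp B (hcomp B (id2 B p) ep) (hcomp B (vcomp B (hcomp B s (id2 B f)) (hcomp B (id2 B k') et)) (id2 B p)) = s"
proof -
  have n: "vcomp B (hcomp B (id2 B p) ep) (hcomp B (hcomp B s (id2 B f)) (id2 B p)) =
           vcomp B s (hcomp B (id2 B (comp1 B k' p)) ep)"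
    using natural[of s ep] assms by (simp add: hom1_iff hom2_iff)
  show ?thesis using assms vc_var[OF n] by (simp add: hom1_iff hom2_iff)
qed

lemma kanA: "right_kan B p (comp1 B p f) (hcomp B (id2 B p) ep)"
  unfolding right_kan_def
proof (intro conjI ballI)
  show "p \<in> Arr B" by simp
  show "comp1 B p f \<in> hom1 B (tgt1 B p) (tgt1 B p)" by (simp add: hom1_iff)
  show "hcomp B (id2 B p) ep \<in> hom2 B (comp1 B (comp1 B p f) p) p" by (simp add: hom2_iff)
  fix k' assume k': "k' \<in> hom1 B (tgt1 B p) (tgt1 B p)"
  show "bij_betw (\<lambda>\<beta>. vcomp B (hcomp B (id2 B p) ep) (hcomp B \<beta> (id2 B p))) (hom2 B k' (comp1 B p f)) (hom2 B (comp1 B k' p) p)"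
  proof (rule bij_betw_byWitness[where f'="\<lambda>s. vcomp B (hcomp B s (id2 B f)) (hcomp B (id2 B k') et)"])
    show "\<forall>a\<in>hom2 B k' (comp1 B p f). vcomp B (hcomp B (vcomp B (hcomp B (id2 B p) ep) (hcomp B a (id2 B p))) (id2 B f)) (hcomp B (id2 B k') et) = a"
      using kanA_1[OF k'] by auto
    show "\<forall>a'\<in>hom2 B (comp1 B k' p) p. vcomp B (hcomp B (id2 B p) ep) (hcomp B (vcomp B (hcomp B a' (id2 B f)) (hcomp B (id2 B k') et)) (id2 B p)) = a'"
      using kanA_2[OF k'] by auto
    show "(\<lambda>\<beta>. vcomp B (hcomp B (id2 B p) ep) (hcomp B \<beta> (id2 B p))) ` hom2 B k' (comp1 B p f) \<subseteq> hom2 B (comp1 B k' p) p"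
      using k' by (auto simp: hom1_iff hom2_iff)
    show "(\<lambda>s. vcomp B (hcomp B s (id2 B f)) (hcomp B (id2 B k') et)) ` hom2 B (comp1 B k' p) p \<subseteq> hom2 B k' (comp1 B p f)"
      using k' by (auto simp: hom1_iff hom2_iff)
  qed
qed

lemma dirA:
  assumes cd: "cokernel_diagram B p c d0 d1 al P D0 D1 D2 s0"
    and ld: "lax_descent B p d0 d1 D0 D1 D2 s0 L d Ps"
    and pH: "pH \<in> hom1 B (src1 B p) L" "comp1 B d pH = p" "hcomp B Ps (id2 B pH) = al" "equivalence1 B pH"
  shows "monadic B p"
proof -
  have cdb[simp]: "c \<in> Obj B" "d0 \<in> Arr B" "src1 B d0 = tgt1 B p" "tgt1 B d0 = c"
    "d1 \<in> Arr B" "src1 B d1 = tgt1 B p" "tgt1 B d1 = c"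
    "al \<in> Cell B" "dom2 B al = comp1 B d1 p" "cod2 B al = comp1 B d0 p"
    using cd unfolding cokernel_diagram_def opcomma_def hom1_def hom2_def by auto
  define t where "t = comp1 B p f"
  define ga where "ga = hcomp B (id2 B p) ep"
  define m where "m = hcomp B (hcomp B (hcomp B (id2 B p) ep) (id2 B f)) (id2 B (id1 B (tgt1 B p)))"
  define k where "k = vcomp B (hcomp B al (id2 B f)) (hcomp B (id2 B d1) et)"
  have mdef: "m = hcomp B (hcomp B (id2 B p) ep) (id2 B f)" unfolding m_def by simp
  have alnat: "vcomp B (hcomp B (id2 B (comp1 B d0 p)) ep) (hcomp B (hcomp B al (id2 B f)) (id2 B p)) =
      vcomp B al (hcomp B (id2 B (comp1 B d1 p)) ep)"
    using natural[of al ep] by simp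
  interpret C: core B p c d0 d1 al P D0 D1 D2 s0 t ga et m k
  proof (unfold_locales)
    show "cokernel_diagram B p c d0 d1 al P D0 D1 D2 s0" by (rule cd)
    show "t \<in> hom1 B (tgt1 B p) (tgt1 B p)" unfolding t_def by (simp add: hom1_iff)
    show "ga \<in> hom2 B (comp1 B t p) p" unfolding t_def ga_def by (simp add: hom2_iff)
    show "et \<in> hom2 B (id1 B (tgt1 B p)) t" unfolding t_def by (simp add: hom2_iff)
    show "vcomp B ga (hcomp B et (id2 B p)) = id2 B p" unfolding ga_def by simp
    show "m \<in> hom2 B (comp1 B t t) t" unfolding t_def mdef by (simp add: hom2_iff)
    have "hcomp B (id2 B p) (vcomp B ep (hcomp B (hcomp B ep (id2 B f)) (id2 B p))) =
          hcomp B (id2 B p) (vcomp B ep (hcomp B (id2 B (comp1 B f p)) ep))"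
      by (simp only: ep_nat)
    then show "vcomp B ga (hcomp B m (id2 B p)) = vcomp B ga (hcomp B (id2 B t) ga)"
      unfolding t_def mdef ga_def by simp
    show "k \<in> hom2 B d1 (comp1 B d0 t)" unfolding t_def k_def by (simp add: hom2_iff)
    show "vcomp B (hcomp B (id2 B d0) ga) (hcomp B k (id2 B p)) = al"
      unfolding k_def ga_def using vc_var[OF alnat] by simp
    fix x y assume x: "x \<in> hom2 B t t" and y: "y \<in> hom2 B t t"
      and e: "vcomp B ga (hcomp B x (id2 B p)) = vcomp B ga (hcomp B y (id2 B p))"
    have "t \<in> hom1 B (tgt1 B p) (tgt1 B p)" unfolding t_def by (simp add: hom1_iff)
    then show "x = y" using kanA_1[of t x] kanA_1[of t y] x y e unfolding t_def ga_def by metis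
  qed
  have ldb[simp]: "L \<in> Obj B" "d \<in> Arr B" "src1 B d = L" "tgt1 B d = tgt1 B p"
    "Ps \<in> Cell B" "dom2 B Ps = comp1 B d1 d" "cod2 B Ps = comp1 B d0 d"
    using ld unfolding lax_descent_def hom1_def hom2_def by auto
  have ld1: "\<And>y h be. y \<in> Obj B \<Longrightarrow> h \<in> hom1 B y (tgt1 B p) \<Longrightarrow> desc_datum B d0 d1 D0 D1 D2 s0 h be \<Longrightarrow>
      \<exists>!g. g \<in> hom1 B y L \<and> comp1 B d g = h \<and> hcomp B Ps (id2 B g) = be"
    using ld unfolding lax_descent_def by blast
  have ld2: "\<And>y g g' xi. y \<in> Obj B \<Longrightarrow> g \<in> hom1 B y L \<Longrightarrow> g' \<in> hom1 B y L \<Longrightarrow>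
      xi \<in> hom2 B (comp1 B d g) (comp1 B d g') \<Longrightarrow>
      vcomp B (hcomp B Ps (id2 B g')) (hcomp B (id2 B d1) xi) = vcomp B (hcomp B (id2 B d0) xi) (hcomp B Ps (id2 B g)) \<Longrightarrow>
      \<exists>!z. z \<in> hom2 B g g' \<and> hcomp B (id2 B d) z = xi"
    using ld unfolding lax_descent_def by blast
  define mu where "mu = hcomp B (id2 B C.r) Ps"
  have mu_h: "mu \<in> hom2 B (comp1 B t d) d" unfolding mu_def by (simp add: hom2_iff)
  have part1: "\<exists>!g. g \<in> hom1 B y L \<and> comp1 B d g = h \<and> hcomp B mu (id2 B g) = a"
    if y: "y \<in> Obj B" and h: "h \<in> hom1 B y (tgt1 B p)" and a: "a \<in> hom2 B (comp1 B t h) h"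
     and alg: "vcomp B a (hcomp B (id2 B t) a) = vcomp B a (hcomp B m (id2 B h)) \<and>
               vcomp B a (hcomp B et (id2 B h)) = id2 B h" for y h a
  proof -
    have hA: "h \<in> Arr B" "tgt1 B h = tgt1 B p" using h by (auto simp: hom1_iff)
    have dd: "desc_datum B d0 d1 D0 D1 D2 s0 h (vcomp B (hcomp B (id2 B d0) a) (hcomp B k (id2 B h)))"
      using C.alg_to_desc[OF hA a] alg by auto
    obtain g where g: "g \<in> hom1 B y L" "comp1 B d g = h"
       "hcomp B Ps (id2 B g) = vcomp B (hcomp B (id2 B d0) a) (hcomp B k (id2 B h))"
      and gu: "\<And>g'. g' \<in> hom1 B y L \<and> comp1 B d g' = h \<and> hcomp B Ps (id2 B g') = vcomp B (hcomp B (id2 B d0) a) (hcomp B k (id2 B h)) \<Longrightarrow> g' = g"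
      using ld1[OF y h dd] by metis
    show ?thesis
    proof (rule ex1I[of _ g])
      have "hcomp B mu (id2 B g) = hcomp B (id2 B C.r) (hcomp B Ps (id2 B g))"
        using g(1) unfolding mu_def by (simp add: hom1_iff)
      also have "\<dots> = a" unfolding g(3) using C.r_Phi[OF hA a] .
      finally show "g \<in> hom1 B y L \<and> comp1 B d g = h \<and> hcomp B mu (id2 B g) = a" using g by auto
    next
      fix g' assume g': "g' \<in> hom1 B y L \<and> comp1 B d g' = h \<and> hcomp B mu (id2 B g') = a"
      have g'A: "g' \<in> Arr B" "src1 B g' = y" "tgt1 B g' = L" using g' by (auto simp: hom1_iff)
      have dg': "comp1 B d g' = h" using g' by auto
      have ra: "hcomp B (id2 B C.r) (hcomp B Ps (id2 B g')) = a"
        using g' g'A unfolding mu_def by simp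
      have ph: "hcomp B Ps (id2 B g') \<in> hom2 B (comp1 B d1 h) (comp1 B d0 h)"
        using g'A unfolding dg'[symmetric] by (simp add: hom2_iff)
      have "hcomp B Ps (id2 B g') = vcomp B (hcomp B (id2 B (comp1 B d0 C.r)) (hcomp B Ps (id2 B g'))) (hcomp B k (id2 B h))"
        using C.decomp[OF hA hA ph] .
      also have "hcomp B (id2 B (comp1 B d0 C.r)) (hcomp B Ps (id2 B g')) = hcomp B (id2 B d0) (hcomp B (id2 B C.r) (hcomp B Ps (id2 B g')))"
        using g'A by simp
      finally have "hcomp B Ps (id2 B g') = vcomp B (hcomp B (id2 B d0) a) (hcomp B k (id2 B h))"
        unfolding ra .
      then show "g' = g" using gu g' by blast
    qed
  qed
  have part2: "\<exists>!z. z \<in> hom2 B g g' \<and> hcomp B (id2 B d) z = xi"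
    if y: "y \<in> Obj B" and g: "g \<in> hom1 B y L" and g': "g' \<in> hom1 B y L"
     and xi: "xi \<in> hom2 B (comp1 B d g) (comp1 B d g')"
     and E: "vcomp B xi (hcomp B mu (id2 B g)) = vcomp B (hcomp B mu (id2 B g')) (hcomp B (id2 B t) xi)"
    for y g g' xi
  proof (rule ld2[OF y g g' xi])
    have gA: "g \<in> Arr B" "src1 B g = y" "tgt1 B g = L" "g' \<in> Arr B" "src1 B g' = y" "tgt1 B g' = L"
      using g g' by (auto simp: hom1_iff)
    have E': "vcomp B (hcomp B (id2 B C.r) (hcomp B Ps (id2 B g'))) (hcomp B (id2 B t) xi) =
              vcomp B xi (hcomp B (id2 B C.r) (hcomp B Ps (id2 B g)))"
      using E gA unfolding mu_def by simp
    show "vcomp B (hcomp B Ps (id2 B g')) (hcomp B (id2 B d1) xi) = vcomp B (hcomp B (id2 B d0) xi) (hcomp B Ps (id2 B g))"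
      apply (rule C.mor_bwd[of "comp1 B d g" "comp1 B d g'"])
      using gA xi E' by (simp_all add: hom2_iff)
  qed
  have em: "em_object B (tgt1 B p) t m et L d mu"
    unfolding em_object_def
    apply (intro conjI ballI impI)
        apply simp
       apply (simp add: hom1_iff)
      apply (rule mu_h)
     apply (rule part1; assumption)
    apply (rule part2; assumption)
    done
  show ?thesis
    unfolding monadic_def
  proof (intro exI conjI)
    show "right_kan B p t ga" unfolding t_def ga_def by (rule kanA)
    show "em_object B (tgt1 B p) t m et L d mu" by (rule em)
    show "m \<in> hom2 B (comp1 B t t) t" by (rule C.m_h)
    show "vcomp B ga (hcomp B m (id2 B p)) = vcomp B ga (hcomp B (id2 B t) ga)" by (rule C.m_ass)
    show "et \<in> hom2 B (id1 B (tgt1 B p)) t" by (rule C.et_h)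
    show "vcomp B ga (hcomp B et (id2 B p)) = id2 B p" by (rule C.et_unit)
    show "pH \<in> hom1 B (src1 B p) L" by (rule pH(1))
    show "comp1 B d pH = p" by (rule pH(2))
    show "equivalence1 B pH" by (rule pH(4))
    have pHA: "pH \<in> Arr B" "src1 B pH = src1 B p" "tgt1 B pH = L" using pH(1) by (auto simp: hom1_iff)
    have "hcomp B mu (id2 B pH) = hcomp B (id2 B C.r) (hcomp B Ps (id2 B pH))"
      unfolding mu_def using pHA by simp
    also have "\<dots> = ga" unfolding pH(3) by simp
    finally show "hcomp B mu (id2 B pH) = ga" .
  qed
qed

end


context tc
begin

lemma tri2_from_tri1:
  assumes F1: "F1 \<in> Arr B" and G1: "G1 \<in> Arr B" "src1 B G1 = tgt1 B F1" "tgt1 B G1 = src1 B F1"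
    and w: "w \<in> Cell B" "dom2 B w = id1 B (src1 B F1)" "cod2 B w = comp1 B G1 F1"
    and w': "w' \<in> Cell B" "dom2 B w' = comp1 B G1 F1" "cod2 B w' = id1 B (src1 B F1)"
    and ww': "vcomp B w' w = id2 B (id1 B (src1 B F1))" "vcomp B w w' = id2 B (comp1 B G1 F1)"
    and e: "e \<in> Cell B" "dom2 B e = comp1 B F1 G1" "cod2 B e = id1 B (tgt1 B F1)"
    and e': "e' \<in> Cell B" "dom2 B e' = id1 B (tgt1 B F1)" "cod2 B e' = comp1 B F1 G1"
    and ee': "vcomp B e e' = id2 B (id1 B (tgt1 B F1))" "vcomp B e' e = id2 B (comp1 B F1 G1)"
    and tri1: "vcomp B (hcomp B e (id2 B F1)) (hcomp B (id2 B F1) w) = id2 B F1"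
  shows "vcomp B (hcomp B (id2 B G1) e) (hcomp B w (id2 B G1)) = id2 B G1"
proof -
  note [simp] = F1 G1 w w' e e'
  define T where "T = vcomp B (hcomp B (id2 B G1) e) (hcomp B w (id2 B G1))"
  have T: "T \<in> Cell B" "dom2 B T = G1" "cod2 B T = G1" unfolding T_def by simp_all
  have a: "vcomp B (hcomp B w (id2 B G1)) (hcomp B (id2 B G1) e) =
     vcomp B (hcomp B (id2 B (comp1 B (comp1 B G1 F1) G1)) e) (hcomp B (hcomp B (hcomp B w (id2 B G1)) (id2 B F1)) (id2 B G1))"
    using natural[of w "hcomp B (id2 B G1) e"] by simp
  have nee: "vcomp B e (hcomp B (id2 B (comp1 B F1 G1)) e) = vcomp B e (hcomp B (hcomp B e (id2 B F1)) (id2 B G1))"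
    using natural[of e e] by simp
  have b: "vcomp B (hcomp B (id2 B G1) e) (hcomp B (id2 B (comp1 B (comp1 B G1 F1) G1)) e) =
     vcomp B (hcomp B (id2 B G1) e) (hcomp B (hcomp B (hcomp B (id2 B G1) e) (id2 B F1)) (id2 B G1))"
  proof -
    have "hcomp B (id2 B G1) (vcomp B e (hcomp B (id2 B (comp1 B F1 G1)) e)) =
          hcomp B (id2 B G1) (vcomp B e (hcomp B (hcomp B e (id2 B F1)) (id2 B G1)))"
      by (simp only: nee)
    then show ?thesis by simp
  qed
  have nww: "vcomp B (hcomp B (hcomp B w (id2 B G1)) (id2 B F1)) w = vcomp B (hcomp B (id2 B (comp1 B G1 F1)) w) w"
    using natural[of w w] by simp
  have c: "vcomp B (hcomp B (hcomp B (hcomp B w (id2 B G1)) (id2 B F1)) (id2 B G1)) (hcomp B w (id2 B G1)) =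
           vcomp B (hcomp B (hcomp B (id2 B (comp1 B G1 F1)) w) (id2 B G1)) (hcomp B w (id2 B G1))"
  proof -
    have "hcomp B (vcomp B (hcomp B (hcomp B w (id2 B G1)) (id2 B F1)) w) (id2 B G1) =
          hcomp B (vcomp B (hcomp B (id2 B (comp1 B G1 F1)) w) w) (id2 B G1)"
      by (simp only: nww)
    then show ?thesis by simp
  qed
  have d: "vcomp B (hcomp B (hcomp B (hcomp B (id2 B G1) e) (id2 B F1)) (id2 B G1))
             (hcomp B (hcomp B (id2 B (comp1 B G1 F1)) w) (id2 B G1)) = id2 B (comp1 B (comp1 B G1 F1) G1)"
  proof -
    have "hcomp B (id2 B G1) (hcomp B (vcomp B (hcomp B e (id2 B F1)) (hcomp B (id2 B F1) w)) (id2 B G1)) =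
          hcomp B (id2 B G1) (hcomp B (id2 B F1) (id2 B G1))"
      by (simp only: tri1)
    then show ?thesis by simp
  qed
  have TT: "vcomp B T T = T"
  proof -
    have "vcomp B T T = vcomp B (hcomp B (id2 B G1) e) (vcomp B (hcomp B w (id2 B G1))
            (vcomp B (hcomp B (id2 B G1) e) (hcomp B w (id2 B G1))))"
      unfolding T_def by simp
    also have "\<dots> = vcomp B (hcomp B (id2 B G1) e) (vcomp B (hcomp B (id2 B (comp1 B (comp1 B G1 F1) G1)) e)
         (vcomp B (hcomp B (hcomp B (hcomp B w (id2 B G1)) (id2 B F1)) (id2 B G1)) (hcomp B w (id2 B G1))))"
      using vc_var[OF a] by simp
    also have "\<dots> = vcomp B (hcomp B (id2 B G1) e) (vcomp B (hcomp B (hcomp B (hcomp B (id2 B G1) e) (id2 B F1)) (id2 B G1))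
         (vcomp B (hcomp B (hcomp B (hcomp B w (id2 B G1)) (id2 B F1)) (id2 B G1)) (hcomp B w (id2 B G1))))"
      using vc_var[OF b] by simp
    also have "\<dots> = vcomp B (hcomp B (id2 B G1) e) (vcomp B (hcomp B (hcomp B (hcomp B (id2 B G1) e) (id2 B F1)) (id2 B G1))
         (vcomp B (hcomp B (hcomp B (id2 B (comp1 B G1 F1)) w) (id2 B G1)) (hcomp B w (id2 B G1))))"
      using c by simp
    also have "\<dots> = T"
      unfolding T_def using vc_var[OF d] by simp
    finally show ?thesis .
  qed
  define T' where "T' = vcomp B (hcomp B w' (id2 B G1)) (hcomp B (id2 B G1) e')"
  have T': "T' \<in> Cell B" "dom2 B T' = G1" "cod2 B T' = G1" unfolding T'_def by simp_all
  have eGe: "vcomp B (hcomp B (id2 B G1) e') (hcomp B (id2 B G1) e) = id2 B (comp1 B G1 (comp1 B F1 G1))"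
  proof -
    have "hcomp B (id2 B G1) (vcomp B e' e) = id2 B (comp1 B G1 (comp1 B F1 G1))" using ee' by simp
    then show ?thesis by simp
  qed
  have wGw: "vcomp B (hcomp B w' (id2 B G1)) (hcomp B w (id2 B G1)) = id2 B G1"
  proof -
    have "hcomp B (vcomp B w' w) (id2 B G1) = id2 B G1" using ww' by simp
    then show ?thesis by simp
  qed
  have T'T: "vcomp B T' T = id2 B G1"
    unfolding T_def T'_def using vc_var[OF eGe] wGw by simp
  have "T = vcomp B (vcomp B T' T) T" using T'T T by simp
  also have "\<dots> = vcomp B T' (vcomp B T T)" using T T' by simp
  also have "\<dots> = id2 B G1" using TT T'T by simp
  finally show ?thesis unfolding T_def .
qed

lemma adj_equiv:
  assumes F1: "F1 \<in> Arr B" and G1: "G1 \<in> Arr B" "src1 B G1 = tgt1 B F1" "tgt1 B G1 = src1 B F1"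
    and w: "w \<in> Cell B" "dom2 B w = id1 B (src1 B F1)" "cod2 B w = comp1 B G1 F1"
    and w': "w' \<in> Cell B" "dom2 B w' = comp1 B G1 F1" "cod2 B w' = id1 B (src1 B F1)"
    and ww': "vcomp B w' w = id2 B (id1 B (src1 B F1))" "vcomp B w w' = id2 B (comp1 B G1 F1)"
    and e: "e \<in> Cell B" "dom2 B e = comp1 B F1 G1" "cod2 B e = id1 B (tgt1 B F1)"
    and e': "e' \<in> Cell B" "dom2 B e' = id1 B (tgt1 B F1)" "cod2 B e' = comp1 B F1 G1"
    and ee': "vcomp B e e' = id2 B (id1 B (tgt1 B F1))" "vcomp B e' e = id2 B (comp1 B F1 G1)"
  shows "adjunction B F1 G1 w (vcomp B e (vcomp B (hcomp B (hcomp B (id2 B F1) w') (id2 B G1)) (hcomp B (hcomp B e' (id2 B F1)) (id2 B G1))))"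
proof -
  note [simp] = F1 G1 w w' e e'
  define E where "E = vcomp B e (vcomp B (hcomp B (hcomp B (id2 B F1) w') (id2 B G1)) (hcomp B (hcomp B e' (id2 B F1)) (id2 B G1)))"
  define E' where "E' = vcomp B (hcomp B (hcomp B e (id2 B F1)) (id2 B G1)) (vcomp B (hcomp B (hcomp B (id2 B F1) w) (id2 B G1)) e')"
  have E: "E \<in> Cell B" "dom2 B E = comp1 B F1 G1" "cod2 B E = id1 B (tgt1 B F1)" unfolding E_def by simp_all
  have E': "E' \<in> Cell B" "dom2 B E' = id1 B (tgt1 B F1)" "cod2 B E' = comp1 B F1 G1" unfolding E'_def by simp_all
  have x1: "vcomp B (hcomp B (hcomp B e' (id2 B F1)) (id2 B G1)) (hcomp B (hcomp B e (id2 B F1)) (id2 B G1)) = id2 B (comp1 B (comp1 B F1 G1) (comp1 B F1 G1))"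
  proof -
    have "hcomp B (vcomp B e' e) (id2 B (comp1 B F1 G1)) = id2 B (comp1 B (comp1 B F1 G1) (comp1 B F1 G1))" using ee' by simp
    then show ?thesis by simp
  qed
  have x2: "vcomp B (hcomp B (hcomp B (id2 B F1) w') (id2 B G1)) (hcomp B (hcomp B (id2 B F1) w) (id2 B G1)) = id2 B (comp1 B F1 G1)"
  proof -
    have "hcomp B (id2 B F1) (hcomp B (vcomp B w' w) (id2 B G1)) = id2 B (comp1 B F1 G1)" using ww' by simp
    then show ?thesis by simp
  qed
  have x3: "vcomp B (hcomp B (hcomp B (id2 B F1) w) (id2 B G1)) (hcomp B (hcomp B (id2 B F1) w') (id2 B G1)) = id2 B (comp1 B (comp1 B (comp1 B F1 G1) F1) G1)"
  proof -
    have "hcomp B (id2 B F1) (hcomp B (vcomp B w w') (id2 B G1)) = id2 B (comp1 B (comp1 B (comp1 B F1 G1) F1) G1)" using ww' by simp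
    then show ?thesis by simp
  qed
  have x4: "vcomp B (hcomp B (hcomp B e (id2 B F1)) (id2 B G1)) (hcomp B (hcomp B e' (id2 B F1)) (id2 B G1)) = id2 B (comp1 B F1 G1)"
  proof -
    have "hcomp B (vcomp B e e') (id2 B (comp1 B F1 G1)) = id2 B (comp1 B F1 G1)" using ee' by simp
    then show ?thesis by simp
  qed
  have EE': "vcomp B E E' = id2 B (id1 B (tgt1 B F1))"
    unfolding E_def E'_def using vc_var[OF x1] vc_var[OF x2] ee' by simp
  have E'E: "vcomp B E' E = id2 B (comp1 B F1 G1)"
    unfolding E_def E'_def using vc_var[OF ee'(2)] vc_var[OF x3] x4 by simp
  have sa: "vcomp B (hcomp B (hcomp B (hcomp B e' (id2 B F1)) (id2 B G1)) (id2 B F1)) (hcomp B (id2 B F1) w) =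
            vcomp B (hcomp B (id2 B (comp1 B (comp1 B F1 G1) F1)) w) (hcomp B e' (id2 B F1))"
    using natural[of e' "hcomp B (id2 B F1) w"] by simp
  have nw: "vcomp B (hcomp B (hcomp B w' (id2 B G1)) (id2 B F1)) (hcomp B (id2 B (comp1 B G1 F1)) w) = id2 B (comp1 B G1 F1)"
    using natural[of w' w] ww' by simp
  have sb: "vcomp B (hcomp B (hcomp B (hcomp B (id2 B F1) w') (id2 B G1)) (id2 B F1)) (hcomp B (id2 B (comp1 B (comp1 B F1 G1) F1)) w) =
            id2 B (comp1 B (comp1 B F1 G1) F1)"
  proof -
    have "hcomp B (id2 B F1) (vcomp B (hcomp B (hcomp B w' (id2 B G1)) (id2 B F1)) (hcomp B (id2 B (comp1 B G1 F1)) w)) = id2 B (comp1 B (comp1 B F1 G1) F1)"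
      by (simp only: nw) simp
    then show ?thesis by simp
  qed
  have sc: "vcomp B (hcomp B e (id2 B F1)) (hcomp B e' (id2 B F1)) = id2 B F1"
  proof -
    have "hcomp B (vcomp B e e') (id2 B F1) = id2 B F1" using ee' by simp
    then show ?thesis by simp
  qed
  have t1: "vcomp B (hcomp B E (id2 B F1)) (hcomp B (id2 B F1) w) = id2 B F1"
    unfolding E_def using sa vc_var[OF sb] sc by simp
  have t2: "vcomp B (hcomp B (id2 B G1) E) (hcomp B w (id2 B G1)) = id2 B G1"
    by (rule tri2_from_tri1[OF F1 G1 w w' ww' E E' EE' E'E t1])
  show ?thesis unfolding E_def[symmetric] adjunction_def
    using t1 t2 E by (simp add: hom1_iff hom2_iff)
qed

lemma equiv_adj:
  assumes "equivalence1 B g"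
  obtains f w w' e where "adjunction B f g w e" "w' \<in> hom2 B (comp1 B g f) (id1 B (src1 B f))"
    "vcomp B w' w = id2 B (id1 B (src1 B f))" "vcomp B w w' = id2 B (comp1 B g f)"
proof -
  obtain f a b where f: "f \<in> hom1 B (tgt1 B g) (src1 B g)" and g: "g \<in> Arr B"
    and a: "a \<in> hom2 B (comp1 B f g) (id1 B (src1 B g))" "invertible2 B a"
    and b: "b \<in> hom2 B (comp1 B g f) (id1 B (tgt1 B g))" "invertible2 B b"
    using assms unfolding equivalence1_def by blast
  obtain a' where a': "a' \<in> hom2 B (id1 B (src1 B g)) (comp1 B f g)" "vcomp B a a' = id2 B (id1 B (src1 B g))"
     "vcomp B a' a = id2 B (comp1 B f g)"
    using a unfolding invertible2_def hom2_def by auto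
  obtain b' where b': "b' \<in> hom2 B (id1 B (tgt1 B g)) (comp1 B g f)" "vcomp B b b' = id2 B (id1 B (tgt1 B g))"
     "vcomp B b' b = id2 B (comp1 B g f)"
    using b unfolding invertible2_def hom2_def by auto
  have fA: "f \<in> Arr B" "src1 B f = tgt1 B g" "tgt1 B f = src1 B g" using f by (auto simp: hom1_iff)
  have aa: "a \<in> Cell B" "dom2 B a = comp1 B f g" "cod2 B a = id1 B (src1 B g)"
    "a' \<in> Cell B" "cod2 B a' = comp1 B f g" "dom2 B a' = id1 B (src1 B g)"
    "b \<in> Cell B" "dom2 B b = comp1 B g f" "cod2 B b = id1 B (tgt1 B g)"
    "b' \<in> Cell B" "cod2 B b' = comp1 B g f" "dom2 B b' = id1 B (tgt1 B g)"
    using a(1) a'(1) b(1) b'(1) by (simp_all add: hom2_iff)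
  have ad: "adjunction B f g b' (vcomp B a (vcomp B (hcomp B (hcomp B (id2 B f) b) (id2 B g)) (hcomp B (hcomp B a' (id2 B f)) (id2 B g))))"
    apply (rule adj_equiv)
    apply (simp_all only: fA aa g)
    using a'(2,3) b'(2,3) by (simp_all add: fA)
  show ?thesis
    apply (rule that[OF ad, of b])
    using b(1) b'(2,3) fA by (simp_all add: hom2_iff)
qed

lemma kan_inj_gen:
  assumes "right_kan B p t ga" "k \<in> hom1 B (tgt1 B p) (tgt1 B p)" "x \<in> hom2 B k t" "y \<in> hom2 B k t"
    "vcomp B ga (hcomp B x (id2 B p)) = vcomp B ga (hcomp B y (id2 B p))"
  shows "x = y"
proof -
  have "inj_on (\<lambda>\<beta>. vcomp B ga (hcomp B \<beta> (id2 B p))) (hom2 B k t)"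
    using assms(1,2) unfolding right_kan_def using bij_betw_imp_inj_on by blast
  from inj_onD[OF this assms(5) assms(3) assms(4)] show ?thesis .
qed

lemma kan_surj_gen:
  assumes "right_kan B p t ga" "k \<in> hom1 B (tgt1 B p) (tgt1 B p)" "s \<in> hom2 B (comp1 B k p) p"
  obtains x where "x \<in> hom2 B k t" "vcomp B ga (hcomp B x (id2 B p)) = s"
proof -
  have "(\<lambda>\<beta>. vcomp B ga (hcomp B \<beta> (id2 B p))) ` (hom2 B k t) = hom2 B (comp1 B k p) p"
    using assms(1,2) unfolding right_kan_def using bij_betw_imp_surj_on by blast
  then have "s \<in> (\<lambda>\<beta>. vcomp B ga (hcomp B \<beta> (id2 B p))) ` (hom2 B k t)" using assms(3) by (simp only:)
  then obtain x where "x \<in> hom2 B k t" "s = vcomp B ga (hcomp B x (id2 B p))" by (rule imageE)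
  then show ?thesis using that by metis
qed

end

locale mon = tc +
  fixes p t ga m et bT u mu pT
  assumes kan: "right_kan B p t ga"
  and m_h: "m \<in> hom2 B (comp1 B t t) t"
  and m_ass: "vcomp B ga (hcomp B m (id2 B p)) = vcomp B ga (hcomp B (id2 B t) ga)"
  and et_h: "et \<in> hom2 B (id1 B (tgt1 B p)) t"
  and et_unit: "vcomp B ga (hcomp B et (id2 B p)) = id2 B p"
  and em: "em_object B (tgt1 B p) t m et bT u mu"
  and pT_h: "pT \<in> hom1 B (src1 B p) bT"
  and up: "comp1 B u pT = p"
  and mup: "hcomp B mu (id2 B pT) = ga"
  and pT_eq: "equivalence1 B pT"
begin

lemma mbasic[simp]: "p \<in> Arr B" "t \<in> Arr B" "src1 B t = tgt1 B p" "tgt1 B t = tgt1 B p"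
  "ga \<in> Cell B" "dom2 B ga = comp1 B t p" "cod2 B ga = p"
  "m \<in> Cell B" "dom2 B m = comp1 B t t" "cod2 B m = t"
  "et \<in> Cell B" "dom2 B et = id1 B (tgt1 B p)" "cod2 B et = t"
  "bT \<in> Obj B" "u \<in> Arr B" "src1 B u = bT" "tgt1 B u = tgt1 B p"
  "mu \<in> Cell B" "dom2 B mu = comp1 B t u" "cod2 B mu = u"
  "pT \<in> Arr B" "src1 B pT = src1 B p" "tgt1 B pT = bT"
  using kan m_h et_h em pT_h unfolding right_kan_def em_object_def hom1_def hom2_def by auto

lemma em1: "y \<in> Obj B \<Longrightarrow> h \<in> hom1 B y (tgt1 B p) \<Longrightarrow> be \<in> hom2 B (comp1 B t h) h \<Longrightarrow>
   vcomp B be (hcomp B (id2 B t) be) = vcomp B be (hcomp B m (id2 B h)) \<Longrightarrow>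
   vcomp B be (hcomp B et (id2 B h)) = id2 B h \<Longrightarrow>
   \<exists>!g. g \<in> hom1 B y bT \<and> comp1 B u g = h \<and> hcomp B mu (id2 B g) = be"
  using em unfolding em_object_def by blast

lemma em2: "y \<in> Obj B \<Longrightarrow> g \<in> hom1 B y bT \<Longrightarrow> g' \<in> hom1 B y bT \<Longrightarrow> xi \<in> hom2 B (comp1 B u g) (comp1 B u g') \<Longrightarrow>
   vcomp B xi (hcomp B mu (id2 B g)) = vcomp B (hcomp B mu (id2 B g')) (hcomp B (id2 B t) xi) \<Longrightarrow>
   \<exists>!z. z \<in> hom2 B g g' \<and> hcomp B (id2 B u) z = xi"
  using em unfolding em_object_def by blast

lemma kinj: "k \<in> hom1 B (tgt1 B p) (tgt1 B p) \<Longrightarrow> x \<in> hom2 B k t \<Longrightarrow> y \<in> hom2 B k t \<Longrightarrow>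
    vcomp B ga (hcomp B x (id2 B p)) = vcomp B ga (hcomp B y (id2 B p)) \<Longrightarrow> x = y"
  using kan_inj_gen[OF kan] by blast

declare up[simp] mup[simp] et_unit[simp] m_ass[simp]
lemmas up_vars[simp] = c1_var[OF up] rr_var[OF up] rw_var[OF mup] vc_var[OF m_ass] vc_var[OF et_unit]

lemma t_etu: "vcomp B (hcomp B (id2 B t) ga) (hcomp B (hcomp B (id2 B t) et) (id2 B p)) = id2 B (comp1 B t p)"
proof -
  have "hcomp B (id2 B t) (vcomp B ga (hcomp B et (id2 B p))) = id2 B (comp1 B t p)" by simp
  then show ?thesis by (simp del: et_unit)
qed

lemma ru: "vcomp B m (hcomp B (id2 B t) et) = id2 B t"
  apply (rule kinj[of t])
  using t_etu vc_var[OF t_etu] by (simp_all add: hom1_iff hom2_iff)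

lemma et_nat: "vcomp B (hcomp B (id2 B t) ga) (hcomp B (hcomp B et (id2 B t)) (id2 B p)) = vcomp B (hcomp B et (id2 B p)) ga"
  using natural[of et ga] by simp

lemma lu: "vcomp B m (hcomp B et (id2 B t)) = id2 B t"
  apply (rule kinj[of t])
  using et_nat vc_var[OF et_nat] by (simp_all add: hom1_iff hom2_iff)

lemma tm_fact: "vcomp B (hcomp B (id2 B t) ga) (hcomp B (hcomp B (id2 B t) m) (id2 B p)) =
   vcomp B (hcomp B (id2 B t) ga) (hcomp B (id2 B (comp1 B t t)) ga)"
proof -
  have "hcomp B (id2 B t) (vcomp B ga (hcomp B m (id2 B p))) = hcomp B (id2 B t) (vcomp B ga (hcomp B (id2 B t) ga))"
    by (simp only: m_ass)
  then show ?thesis by (simp del: m_ass)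
qed

lemma m_nat: "vcomp B (hcomp B (id2 B t) ga) (hcomp B (hcomp B m (id2 B t)) (id2 B p)) =
   vcomp B (hcomp B m (id2 B p)) (hcomp B (id2 B (comp1 B t t)) ga)"
  using natural[of m ga] by simp

lemma assoc: "vcomp B m (hcomp B (id2 B t) m) = vcomp B m (hcomp B m (id2 B t))"
  apply (rule kinj[of "comp1 B (comp1 B t t) t"])
  using tm_fact m_nat vc_var[OF tm_fact] vc_var[OF m_nat] by (simp_all add: hom1_iff hom2_iff)

lemma left_adj: "has_left_adjoint B p"
proof -
  have tb: "tgt1 B p \<in> Obj B" by simp
  obtain fT where fT: "fT \<in> hom1 B (tgt1 B p) bT" "comp1 B u fT = t" "hcomp B mu (id2 B fT) = m"
    using em1[OF tb, of t m] assoc lu m_h by (auto simp: hom1_iff)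
  have fTA[simp]: "fT \<in> Arr B" "src1 B fT = tgt1 B p" "tgt1 B fT = bT" using fT(1) by (auto simp: hom1_iff)
  note fTs[simp] = fT(2,3) c1_var[OF fT(2)] rr_var[OF fT(2)] rw_var[OF fT(3)]
  have sp: "src1 B p \<in> Obj B" by simp
  obtain ze where ze: "ze \<in> hom2 B (comp1 B fT p) pT" "hcomp B (id2 B u) ze = ga"
    using em2[OF sp, of "comp1 B fT p" pT ga] by (auto simp: hom1_iff hom2_iff)
  have zeA[simp]: "ze \<in> Cell B" "dom2 B ze = comp1 B fT p" "cod2 B ze = pT" using ze(1) by (auto simp: hom2_iff)
  note zes[simp] = ze(2) lw_var[OF ze(2)]
  obtain q w w' ph where adq: "adjunction B q pT w ph" and w': "w' \<in> hom2 B (comp1 B pT q) (id1 B (src1 B q))"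
    and ww': "vcomp B w' w = id2 B (id1 B (src1 B q))" "vcomp B w w' = id2 B (comp1 B pT q)"
    using equiv_adj[OF pT_eq] by metis
  interpret Q: adjn B q pT w ph by unfold_locales (rule adq)
  have w'A[simp]: "w' \<in> Cell B" "dom2 B w' = comp1 B pT q" "cod2 B w' = id1 B bT" using w' by (auto simp: hom2_iff)
  note wws[simp] = ww' vc_var[OF ww'(1)] vc_var[OF ww'(2)]
  define zz where "zz = vcomp B w' (vcomp B (hcomp B ze (id2 B q)) (hcomp B (id2 B (comp1 B fT u)) w))"
  have zzA[simp]: "zz \<in> Cell B" "dom2 B zz = comp1 B fT u" "cod2 B zz = id1 B bT" unfolding zz_def by simp_all
  have wz: "vcomp B w zz = vcomp B (hcomp B ze (id2 B q)) (hcomp B (id2 B (comp1 B fT u)) w)"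
    unfolding zz_def by simp
  have munat: "vcomp B (hcomp B ga (id2 B q)) (hcomp B (id2 B (comp1 B t u)) w) = vcomp B (hcomp B (id2 B u) w) mu"
    using natural[of mu w] by simp
  have uww: "vcomp B (hcomp B (id2 B u) w') (hcomp B (id2 B u) w) = id2 B u"
  proof -
    have "hcomp B (id2 B u) (vcomp B w' w) = id2 B u" by simp
    then show ?thesis by (simp del: wws)
  qed
  have uz: "hcomp B (id2 B u) zz = mu"
    unfolding zz_def using munat vc_var[OF munat] vc_var[OF uww] by simp
  note uzs[simp] = uz lw_var[OF uz]
  have zt: "vcomp B (hcomp B zz (id2 B fT)) (hcomp B (id2 B fT) et) = id2 B fT"
  proof -
    have ex: "\<exists>!z. z \<in> hom2 B fT fT \<and> hcomp B (id2 B u) z = id2 B t"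
      using em2[OF tb, of fT fT "id2 B t"] by (simp add: hom1_iff hom2_iff)
    have c1: "id2 B fT \<in> hom2 B fT fT \<and> hcomp B (id2 B u) (id2 B fT) = id2 B t" by (simp add: hom2_iff)
    have c2: "vcomp B (hcomp B zz (id2 B fT)) (hcomp B (id2 B fT) et) \<in> hom2 B fT fT \<and>
        hcomp B (id2 B u) (vcomp B (hcomp B zz (id2 B fT)) (hcomp B (id2 B fT) et)) = id2 B t"
      using ru by (simp add: hom2_iff)
    show ?thesis using ex c1 c2 by blast
  qed
  have kf: "vcomp B (hcomp B (hcomp B (hcomp B (id2 B q) ze) (id2 B q)) (id2 B fT)) (hcomp B (hcomp B (id2 B (comp1 B (comp1 B q fT) u)) w) (id2 B fT)) =
     vcomp B (hcomp B (hcomp B (id2 B q) w) (id2 B fT)) (hcomp B (hcomp B (id2 B q) zz) (id2 B fT))"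
  proof -
    have "hcomp B (id2 B q) (hcomp B (vcomp B w zz) (id2 B fT)) =
          hcomp B (id2 B q) (hcomp B (vcomp B (hcomp B ze (id2 B q)) (hcomp B (id2 B (comp1 B fT u)) w)) (id2 B fT))"
      by (simp only: wz)
    then show ?thesis by simp
  qed
  have pw: "vcomp B (hcomp B (hcomp B ph (id2 B q)) (id2 B fT)) (hcomp B (hcomp B (id2 B q) w) (id2 B fT)) = id2 B (comp1 B q fT)"
  proof -
    have "hcomp B (vcomp B (hcomp B ph (id2 B q)) (hcomp B (id2 B q) w)) (id2 B fT) = hcomp B (id2 B q) (id2 B fT)"
      by (simp only: Q.tri1)
    then show ?thesis by (simp del: Q.tri1 Q.tri2 Q.tri1_l Q.tri2_l Q.tri_vars)
  qed
  have qzt: "vcomp B (hcomp B (hcomp B (id2 B q) zz) (id2 B fT)) (hcomp B (id2 B (comp1 B q fT)) et) = id2 B (comp1 B q fT)"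
  proof -
    have "hcomp B (id2 B q) (vcomp B (hcomp B zz (id2 B fT)) (hcomp B (id2 B fT) et)) = hcomp B (id2 B q) (id2 B fT)"
      by (simp only: zt)
    then show ?thesis by simp
  qed
  have nw: "vcomp B (hcomp B w (id2 B pT)) ze = vcomp B (hcomp B (id2 B (comp1 B pT q)) ze) (hcomp B (hcomp B w (id2 B fT)) (id2 B p))"
    using natural[of w ze] by simp
  have nwu: "vcomp B (hcomp B (id2 B (comp1 B p q)) ze) (hcomp B (hcomp B (hcomp B (id2 B u) w) (id2 B fT)) (id2 B p)) =
     vcomp B (hcomp B (hcomp B (id2 B u) w) (id2 B pT)) ga"
  proof -
    have "hcomp B (id2 B u) (vcomp B (hcomp B w (id2 B pT)) ze) =
          hcomp B (id2 B u) (vcomp B (hcomp B (id2 B (comp1 B pT q)) ze) (hcomp B (hcomp B w (id2 B fT)) (id2 B p)))"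
      by (simp only: nw)
    then show ?thesis by simp
  qed
  have uph: "vcomp B (hcomp B (id2 B p) ph) (hcomp B (hcomp B (id2 B u) w) (id2 B pT)) = id2 B p"
  proof -
    have "hcomp B (id2 B u) (vcomp B (hcomp B (id2 B pT) ph) (hcomp B w (id2 B pT))) = hcomp B (id2 B u) (id2 B pT)"
      by (simp only: Q.tri2)
    then show ?thesis by (simp del: Q.tri1 Q.tri2 Q.tri1_l Q.tri2_l Q.tri_vars)
  qed
  define F where "F = comp1 B q fT"
  define H where "H = vcomp B (hcomp B (hcomp B (id2 B u) w) (id2 B fT)) et"
  define E where "E = vcomp B ph (hcomp B (id2 B q) ze)"
  have t1: "vcomp B (hcomp B E (id2 B F)) (hcomp B (id2 B F) H) = id2 B F"
    unfolding E_def F_def H_def using kf vc_var[OF kf] pw vc_var[OF pw] qzt by simp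
  have t2: "vcomp B (hcomp B (id2 B p) E) (hcomp B H (id2 B p)) = id2 B p"
    unfolding E_def H_def using nwu vc_var[OF nwu] uph vc_var[OF uph] by simp
  have "adjunction B F p H E"
    unfolding adjunction_def using t1 t2 unfolding E_def F_def H_def by (simp add: hom1_iff hom2_iff)
  then show ?thesis unfolding has_left_adjoint_def by blast
qed

lemma eff:
  assumes cd: "cokernel_diagram B p c d0 d1 al P D0 D1 D2 s0"
  shows "effective_faithful B p"
proof -
  have cdb[simp]: "c \<in> Obj B" "d0 \<in> Arr B" "src1 B d0 = tgt1 B p" "tgt1 B d0 = c"
    "d1 \<in> Arr B" "src1 B d1 = tgt1 B p" "tgt1 B d1 = c"
    "al \<in> Cell B" "dom2 B al = comp1 B d1 p" "cod2 B al = comp1 B d0 p"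
    using cd unfolding cokernel_diagram_def opcomma_def hom1_def hom2_def by auto
  obtain F H E where adF: "adjunction B F p H E" using left_adj unfolding has_left_adjoint_def by blast
  interpret A: adjn B F p H E by unfold_locales (rule adF)
  obtain io where io: "io \<in> hom2 B (comp1 B p F) t" "vcomp B ga (hcomp B io (id2 B p)) = hcomp B (id2 B p) E"
    using kan_surj_gen[OF kan, of "comp1 B p F" "hcomp B (id2 B p) E"] by (auto simp: hom1_iff hom2_iff)
  have ioA[simp]: "io \<in> Cell B" "dom2 B io = comp1 B p F" "cod2 B io = t" using io(1) by (auto simp: hom2_iff)
  define k where "k = vcomp B (hcomp B (id2 B d0) io) (vcomp B (hcomp B al (id2 B F)) (hcomp B (id2 B d1) H))"
  have gi: "vcomp B (hcomp B (id2 B d0) ga) (hcomp B (hcomp B (id2 B d0) io) (id2 B p)) = hcomp B (id2 B (comp1 B d0 p)) E"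
  proof -
    have "hcomp B (id2 B d0) (vcomp B ga (hcomp B io (id2 B p))) = hcomp B (id2 B d0) (hcomp B (id2 B p) E)"
      by (simp only: io(2))
    then show ?thesis by simp
  qed
  have alnat: "vcomp B (hcomp B (id2 B (comp1 B d0 p)) E) (hcomp B (hcomp B al (id2 B F)) (id2 B p)) =
      vcomp B al (hcomp B (id2 B (comp1 B d1 p)) E)"
    using natural[of al E] by simp
  interpret C: core B p c d0 d1 al P D0 D1 D2 s0 t ga et m k
  proof (unfold_locales)
    show "cokernel_diagram B p c d0 d1 al P D0 D1 D2 s0" by (rule cd)
    show "t \<in> hom1 B (tgt1 B p) (tgt1 B p)" by (simp add: hom1_iff)
    show "ga \<in> hom2 B (comp1 B t p) p" by (simp add: hom2_iff)
    show "et \<in> hom2 B (id1 B (tgt1 B p)) t" by (rule et_h)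
    show "vcomp B ga (hcomp B et (id2 B p)) = id2 B p" by (rule et_unit)
    show "m \<in> hom2 B (comp1 B t t) t" by (rule m_h)
    show "vcomp B ga (hcomp B m (id2 B p)) = vcomp B ga (hcomp B (id2 B t) ga)" by (rule m_ass)
    show "k \<in> hom2 B d1 (comp1 B d0 t)" unfolding k_def by (simp add: hom2_iff)
    show "vcomp B (hcomp B (id2 B d0) ga) (hcomp B k (id2 B p)) = al"
      unfolding k_def using vc_var[OF gi] vc_var[OF alnat] by simp
    fix x y assume xy: "x \<in> hom2 B t t" "y \<in> hom2 B t t" "vcomp B ga (hcomp B x (id2 B p)) = vcomp B ga (hcomp B y (id2 B p))"
    have "t \<in> hom1 B (tgt1 B p) (tgt1 B p)" by (simp add: hom1_iff)
    from kinj[OF this xy] show "x = y" .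
  qed
  define Ps where "Ps = vcomp B (hcomp B (id2 B d0) mu) (hcomp B k (id2 B u))"
  have PsA[simp]: "Ps \<in> Cell B" "dom2 B Ps = comp1 B d1 u" "cod2 B Ps = comp1 B d0 u" unfolding Ps_def by simp_all
  have part1: "\<exists>!g. g \<in> hom1 B y bT \<and> comp1 B u g = h \<and> hcomp B Ps (id2 B g) = be"
    if y: "y \<in> Obj B" and h: "h \<in> hom1 B y (tgt1 B p)" and dd: "desc_datum B d0 d1 D0 D1 D2 s0 h be" for y h be
  proof -
    have hA: "h \<in> Arr B" "tgt1 B h = tgt1 B p" "src1 B h = y" using h by (auto simp: hom1_iff)
    have bh: "be \<in> hom2 B (comp1 B d1 h) (comp1 B d0 h)" using dd unfolding desc_datum_def by auto
    note al = C.desc_to_alg[OF hA(1,2) dd]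
    obtain g where g: "g \<in> hom1 B y bT" "comp1 B u g = h" "hcomp B mu (id2 B g) = hcomp B (id2 B C.r) be"
      and gu: "\<And>g'. g' \<in> hom1 B y bT \<and> comp1 B u g' = h \<and> hcomp B mu (id2 B g') = hcomp B (id2 B C.r) be \<Longrightarrow> g' = g"
      using em1[OF y h al(1) al(2) al(3)] by metis
    show ?thesis
    proof (rule ex1I[of _ g])
      have gA: "g \<in> Arr B" "src1 B g = y" "tgt1 B g = bT" using g(1) by (auto simp: hom1_iff)
      have "hcomp B Ps (id2 B g) = vcomp B (hcomp B (id2 B (comp1 B d0 C.r)) be) (hcomp B k (id2 B h))"
        unfolding Ps_def using gA hA bh g(2,3) rw_var[OF g(3)] rr_var[OF g(2)] by (simp add: hom2_iff)
      also have "\<dots> = be" using C.decomp[OF hA(1,2) hA(1,2) bh] by simp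
      finally show "g \<in> hom1 B y bT \<and> comp1 B u g = h \<and> hcomp B Ps (id2 B g) = be" using g by auto
    next
      fix g' assume g': "g' \<in> hom1 B y bT \<and> comp1 B u g' = h \<and> hcomp B Ps (id2 B g') = be"
      have gA: "g' \<in> Arr B" "src1 B g' = y" "tgt1 B g' = bT" using g' by (auto simp: hom1_iff)
      have ug: "comp1 B u g' = h" using g' by auto
      have mg: "hcomp B mu (id2 B g') \<in> hom2 B (comp1 B t h) h"
        using gA unfolding ug[symmetric] by (simp add: hom2_iff)
      have "hcomp B Ps (id2 B g') = vcomp B (hcomp B (id2 B d0) (hcomp B mu (id2 B g'))) (hcomp B k (id2 B h))"
        unfolding Ps_def using gA hA rr_var[OF ug] by simp
      then have "hcomp B (id2 B C.r) be = hcomp B mu (id2 B g')"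
        using g' C.r_Phi[OF hA(1,2) mg] by simp
      then show "g' = g" using gu g' by auto
    qed
  qed
  have part2: "\<exists>!z. z \<in> hom2 B g g' \<and> hcomp B (id2 B u) z = xi"
    if y: "y \<in> Obj B" and g: "g \<in> hom1 B y bT" and g': "g' \<in> hom1 B y bT"
     and xi: "xi \<in> hom2 B (comp1 B u g) (comp1 B u g')"
     and E: "vcomp B (hcomp B Ps (id2 B g')) (hcomp B (id2 B d1) xi) = vcomp B (hcomp B (id2 B d0) xi) (hcomp B Ps (id2 B g))"
    for y g g' xi
  proof (rule em2[OF y g g' xi])
    have gA: "g \<in> Arr B" "src1 B g = y" "tgt1 B g = bT" "g' \<in> Arr B" "src1 B g' = y" "tgt1 B g' = bT"
      using g g' by (auto simp: hom1_iff)
    have "vcomp B (hcomp B (id2 B C.r) (hcomp B Ps (id2 B g'))) (hcomp B (id2 B t) xi) =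
          vcomp B xi (hcomp B (id2 B C.r) (hcomp B Ps (id2 B g)))"
      apply (rule C.mor_fwd[of "comp1 B u g" "comp1 B u g'"])
      using gA xi E by (simp_all add: hom2_iff Ps_def)
    moreover have "hcomp B (id2 B C.r) (hcomp B Ps (id2 B g)) = hcomp B mu (id2 B g)"
      using C.r_Phi[of "comp1 B u g" "hcomp B mu (id2 B g)" "comp1 B u g"] gA unfolding Ps_def by (simp add: hom2_iff)
    moreover have "hcomp B (id2 B C.r) (hcomp B Ps (id2 B g')) = hcomp B mu (id2 B g')"
      using C.r_Phi[of "comp1 B u g'" "hcomp B mu (id2 B g')" "comp1 B u g'"] gA unfolding Ps_def by (simp add: hom2_iff)
    ultimately show "vcomp B xi (hcomp B mu (id2 B g)) = vcomp B (hcomp B mu (id2 B g')) (hcomp B (id2 B t) xi)"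
      by simp
  qed
  have ld: "lax_descent B p d0 d1 D0 D1 D2 s0 bT u Ps"
    unfolding lax_descent_def
    apply (intro conjI ballI allI impI)
        apply simp
       apply (simp add: hom1_iff)
      apply (simp add: hom2_iff)
     apply (rule part1; assumption)
    apply (rule part2; assumption)
    done
  have "hcomp B Ps (id2 B pT) = al" unfolding Ps_def by simp
  then show ?thesis unfolding effective_faithful_def
    using cd ld pT_h up pT_eq by blast
qed

end

context tc
begin

lemma main_equiv:
  assumes p: "p \<in> Arr B" and hc: "has_cokernel_diagram B p"
  shows "monadic B p \<longleftrightarrow> has_left_adjoint B p \<and> effective_faithful B p"
proof
  assume "monadic B p"
  then obtain t ga m et bT u mu pT where
    w: "right_kan B p t ga" "m \<in> hom2 B (comp1 B t t) t"
      "vcomp B ga (hcomp B m (id2 B p)) = vcomp B ga (hcomp B (id2 B t) ga)"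
      "et \<in> hom2 B (id1 B (tgt1 B p)) t" "vcomp B ga (hcomp B et (id2 B p)) = id2 B p"
      "em_object B (tgt1 B p) t m et bT u mu"
      "pT \<in> hom1 B (src1 B p) bT" "comp1 B u pT = p" "hcomp B mu (id2 B pT) = ga" "equivalence1 B pT"
    unfolding monadic_def by blast
  interpret M: mon B p t ga m et bT u mu pT
    by unfold_locales (rule w)+
  obtain c d0 d1 al P D0 D1 D2 s0 where cd: "cokernel_diagram B p c d0 d1 al P D0 D1 D2 s0"
    using hc unfolding has_cokernel_diagram_def by blast
  show "has_left_adjoint B p \<and> effective_faithful B p"
    using M.left_adj M.eff[OF cd] by blast
next
  assume "has_left_adjoint B p \<and> effective_faithful B p"
  then obtain F H E where adF: "adjunction B F p H E" and ef: "effective_faithful B p"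
    unfolding has_left_adjoint_def by blast
  interpret A: adjn B F p H E by unfold_locales (rule adF)
  obtain c d0 d1 al P D0 D1 D2 s0 L d Ps pH where
    e: "cokernel_diagram B p c d0 d1 al P D0 D1 D2 s0" "lax_descent B p d0 d1 D0 D1 D2 s0 L d Ps"
       "pH \<in> hom1 B (src1 B p) L" "comp1 B d pH = p" "hcomp B Ps (id2 B pH) = al" "equivalence1 B pH"
    using ef unfolding effective_faithful_def by blast
  show "monadic B p" by (rule A.dirA[OF e])
qed

end

definition co2 :: "('o,'a,'c) twocat \<Rightarrow> ('o,'a,'c) twocat" where
  "co2 B = B\<lparr>dom2 := cod2 B, cod2 := dom2 B, vcomp := (\<lambda>a b. vcomp B b a)\<rparr>"

lemma co2_simps[simp]: "Obj (co2 B) = Obj B" "Arr (co2 B) = Arr B" "src1 (co2 B) = src1 B" "tgt1 (co2 B) = tgt1 B"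
  "comp1 (co2 B) = comp1 B" "id1 (co2 B) = id1 B" "Cell (co2 B) = Cell B" "dom2 (co2 B) = cod2 B"
  "cod2 (co2 B) = dom2 B" "vcomp (co2 B) a b = vcomp B b a" "hcomp (co2 B) = hcomp B" "id2 (co2 B) = id2 B"
  unfolding co2_def by simp_all

lemma op2_simps[simp]: "Obj (op2 B) = Obj B" "Arr (op2 B) = Arr B" "src1 (op2 B) = tgt1 B" "tgt1 (op2 B) = src1 B"
  "comp1 (op2 B) g f = comp1 B f g" "id1 (op2 B) = id1 B" "Cell (op2 B) = Cell B" "dom2 (op2 B) = dom2 B"
  "cod2 (op2 B) = cod2 B" "vcomp (op2 B) = vcomp B" "hcomp (op2 B) a b = hcomp B b a" "id2 (op2 B) = id2 B"
  unfolding op2_def by simp_all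

lemma coop2_eq: "coop2 A = co2 (op2 A)"
  unfolding coop2_def co2_def op2_def by simp

lemma hom1_co[simp]: "hom1 (co2 B) x y = hom1 B x y" unfolding hom1_def by simp
lemma hom2_co[simp]: "hom2 (co2 B) f g = hom2 B g f" unfolding hom2_def by auto
lemma hom1_op[simp]: "hom1 (op2 B) x y = hom1 B y x" unfolding hom1_def by auto
lemma hom2_op[simp]: "hom2 (op2 B) f g = hom2 B f g" unfolding hom2_def by simp

lemma co2_co2[simp]: "co2 (co2 B) = B" unfolding co2_def by simp

lemma tc_co2: "two_category B \<Longrightarrow> two_category (co2 B)"
  unfolding two_category_def by (simp add: hom2_def) (smt (verit))

lemma tc_op2: "two_category B \<Longrightarrow> two_category (op2 B)"
  unfolding two_category_def by (simp add: hom1_def hom2_def) (smt (verit))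


lemma opcomma_co:
  assumes O: "opcomma B p c d0 d1 al"
  shows "opcomma (co2 B) p c d1 d0 al"
proof -
  have b: "p \<in> Arr B \<and> c \<in> Obj B \<and> d0 \<in> hom1 B (tgt1 B p) c \<and> d1 \<in> hom1 B (tgt1 B p) c \<and>
     al \<in> hom2 B (comp1 B d1 p) (comp1 B d0 p)" using O unfolding opcomma_def by blast
  have o1: "\<And>y h0 h1 be. y \<in> Obj B \<Longrightarrow> h0 \<in> hom1 B (tgt1 B p) y \<Longrightarrow> h1 \<in> hom1 B (tgt1 B p) y \<Longrightarrow>
     be \<in> hom2 B (comp1 B h1 p) (comp1 B h0 p) \<Longrightarrow>
     \<exists>!h. h \<in> hom1 B c y \<and> comp1 B h d0 = h0 \<and> comp1 B h d1 = h1 \<and> hcomp B (id2 B h) al = be"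
    using O unfolding opcomma_def by blast
  have o2: "\<And>y h h' x0 x1. y \<in> Obj B \<Longrightarrow> h \<in> hom1 B c y \<Longrightarrow> h' \<in> hom1 B c y \<Longrightarrow>
     x0 \<in> hom2 B (comp1 B h d0) (comp1 B h' d0) \<Longrightarrow> x1 \<in> hom2 B (comp1 B h d1) (comp1 B h' d1) \<Longrightarrow>
     vcomp B (hcomp B x0 (id2 B p)) (hcomp B (id2 B h) al) = vcomp B (hcomp B (id2 B h') al) (hcomp B x1 (id2 B p)) \<Longrightarrow>
     (\<exists>!x. x \<in> hom2 B h h' \<and> hcomp B x (id2 B d0) = x0 \<and> hcomp B x (id2 B d1) = x1)"
    using O unfolding opcomma_def by blast
  show ?thesis unfolding opcomma_def
  proof (simp only: co2_simps hom1_co hom2_co, intro conjI ballI impI)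
    show "p \<in> Arr B" "c \<in> Obj B" "d1 \<in> hom1 B (tgt1 B p) c" "d0 \<in> hom1 B (tgt1 B p) c"
      "al \<in> hom2 B (comp1 B d1 p) (comp1 B d0 p)" using b by auto
  next
    fix y h0 h1 be assume "y \<in> Obj B" "h0 \<in> hom1 B (tgt1 B p) y" "h1 \<in> hom1 B (tgt1 B p) y"
      "be \<in> hom2 B (comp1 B h0 p) (comp1 B h1 p)"
    from o1[OF this(1,3,2,4)]
    show "\<exists>!h. h \<in> hom1 B c y \<and> comp1 B h d1 = h0 \<and> comp1 B h d0 = h1 \<and> hcomp B (id2 B h) al = be"
      by (simp add: conj_ac)
  next
    fix y h h' x0 x1 assume "y \<in> Obj B" "h \<in> hom1 B c y" "h' \<in> hom1 B c y"
      "x0 \<in> hom2 B (comp1 B h' d1) (comp1 B h d1)" "x1 \<in> hom2 B (comp1 B h' d0) (comp1 B h d0)"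
      "vcomp B (hcomp B (id2 B h) al) (hcomp B x0 (id2 B p)) = vcomp B (hcomp B x1 (id2 B p)) (hcomp B (id2 B h') al)"
    from o2[OF this(1,3,2,5,4) this(6)[symmetric]]
    show "\<exists>!x. x \<in> hom2 B h' h \<and> hcomp B x (id2 B d1) = x0 \<and> hcomp B x (id2 B d0) = x1"
      by (simp add: conj_ac)
  qed
qed


lemma pushout2_co:
  assumes O: "pushout2 B f0 f1 P q0 q1"
  shows "pushout2 (co2 B) f1 f0 P q1 q0"
proof -
  have b: "f0 \<in> Arr B \<and> f1 \<in> Arr B \<and> src1 B f0 = src1 B f1 \<and> P \<in> Obj B \<and>
     q0 \<in> hom1 B (tgt1 B f0) P \<and> q1 \<in> hom1 B (tgt1 B f1) P \<and> comp1 B q0 f0 = comp1 B q1 f1"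
    using O unfolding pushout2_def by blast
  have o1: "\<And>y k0 k1. y \<in> Obj B \<Longrightarrow> k0 \<in> hom1 B (tgt1 B f0) y \<Longrightarrow> k1 \<in> hom1 B (tgt1 B f1) y \<Longrightarrow>
     comp1 B k0 f0 = comp1 B k1 f1 \<Longrightarrow> (\<exists>!k. k \<in> hom1 B P y \<and> comp1 B k q0 = k0 \<and> comp1 B k q1 = k1)"
    using O unfolding pushout2_def by blast
  have o2: "\<And>y k k' x0 x1. y \<in> Obj B \<Longrightarrow> k \<in> hom1 B P y \<Longrightarrow> k' \<in> hom1 B P y \<Longrightarrow>
     x0 \<in> hom2 B (comp1 B k q0) (comp1 B k' q0) \<Longrightarrow> x1 \<in> hom2 B (comp1 B k q1) (comp1 B k' q1) \<Longrightarrow>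
     hcomp B x0 (id2 B f0) = hcomp B x1 (id2 B f1) \<Longrightarrow>
     (\<exists>!x. x \<in> hom2 B k k' \<and> hcomp B x (id2 B q0) = x0 \<and> hcomp B x (id2 B q1) = x1)"
    using O unfolding pushout2_def by blast
  show ?thesis unfolding pushout2_def
  proof (simp only: co2_simps hom1_co hom2_co, intro conjI ballI impI)
    show "f1 \<in> Arr B" "f0 \<in> Arr B" "src1 B f1 = src1 B f0" "P \<in> Obj B" "q1 \<in> hom1 B (tgt1 B f1) P"
      "q0 \<in> hom1 B (tgt1 B f0) P" "comp1 B q1 f1 = comp1 B q0 f0" using b by auto
  next
    fix y k0 k1 assume "y \<in> Obj B" "k0 \<in> hom1 B (tgt1 B f1) y" "k1 \<in> hom1 B (tgt1 B f0) y"
      "comp1 B k0 f1 = comp1 B k1 f0"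
    from o1[OF this(1,3,2) this(4)[symmetric]]
    show "\<exists>!k. k \<in> hom1 B P y \<and> comp1 B k q1 = k0 \<and> comp1 B k q0 = k1"
      by (simp add: conj_ac)
  next
    fix y k k' x0 x1 assume "y \<in> Obj B" "k \<in> hom1 B P y" "k' \<in> hom1 B P y"
      "x0 \<in> hom2 B (comp1 B k' q1) (comp1 B k q1)" "x1 \<in> hom2 B (comp1 B k' q0) (comp1 B k q0)"
      "hcomp B x0 (id2 B f1) = hcomp B x1 (id2 B f0)"
    from o2[OF this(1,3,2,5,4) this(6)[symmetric]]
    show "\<exists>!x. x \<in> hom2 B k' k \<and> hcomp B x (id2 B q1) = x0 \<and> hcomp B x (id2 B q0) = x1"
      by (simp add: conj_ac)
  qed
qed

lemma cok_co:
  assumes "cokernel_diagram B p c d0 d1 al P D0 D1 D2 s0"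
  shows "cokernel_diagram (co2 B) p c d1 d0 al P D2 D1 D0 s0"
  using assms opcomma_co[of B p c d0 d1 al] pushout2_co[of B d0 d1 P D2 D0] unfolding cokernel_diagram_def by auto

lemma hascok_co: "has_cokernel_diagram B p \<Longrightarrow> has_cokernel_diagram (co2 B) p"
proof -
  assume "has_cokernel_diagram B p"
  then obtain c d0 d1 al P D0 D1 D2 s0 where "cokernel_diagram B p c d0 d1 al P D0 D1 D2 s0"
    unfolding has_cokernel_diagram_def by blast
  from cok_co[OF this] show ?thesis unfolding has_cokernel_diagram_def by blast
qed

lemma desc_co: "desc_datum (co2 B) d1 d0 D2 D1 D0 s0 h be \<longleftrightarrow> desc_datum B d0 d1 D0 D1 D2 s0 h be"
  unfolding desc_datum_def by auto

lemma lax_co: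
  assumes O: "lax_descent B p d0 d1 D0 D1 D2 s0 L d Ps"
  shows "lax_descent (co2 B) p d1 d0 D2 D1 D0 s0 L d Ps"
proof -
  have b: "L \<in> Obj B \<and> d \<in> hom1 B L (tgt1 B p) \<and> Ps \<in> hom2 B (comp1 B d1 d) (comp1 B d0 d)"
    using O unfolding lax_descent_def by blast
  have o1: "\<And>y h be. y \<in> Obj B \<Longrightarrow> h \<in> hom1 B y (tgt1 B p) \<Longrightarrow> desc_datum B d0 d1 D0 D1 D2 s0 h be \<Longrightarrow>
          (\<exists>!g. g \<in> hom1 B y L \<and> comp1 B d g = h \<and> hcomp B Ps (id2 B g) = be)"
    using O unfolding lax_descent_def by blast
  have o2: "\<And>y g g' x. y \<in> Obj B \<Longrightarrow> g \<in> hom1 B y L \<Longrightarrow> g' \<in> hom1 B y L \<Longrightarrow> x \<in> hom2 B (comp1 B d g) (comp1 B d g') \<Longrightarrow>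
          vcomp B (hcomp B Ps (id2 B g')) (hcomp B (id2 B d1) x) =
            vcomp B (hcomp B (id2 B d0) x) (hcomp B Ps (id2 B g)) \<Longrightarrow>
          (\<exists>!z. z \<in> hom2 B g g' \<and> hcomp B (id2 B d) z = x)"
    using O unfolding lax_descent_def by blast
  show ?thesis unfolding lax_descent_def
  proof (simp only: co2_simps hom1_co hom2_co desc_co, intro conjI ballI impI allI)
    show "L \<in> Obj B" "d \<in> hom1 B L (tgt1 B p)" "Ps \<in> hom2 B (comp1 B d1 d) (comp1 B d0 d)" using b by auto
  next
    fix y h be assume "y \<in> Obj B" "h \<in> hom1 B y (tgt1 B p)" "desc_datum B d0 d1 D0 D1 D2 s0 h be"
    from o1[OF this] show "\<exists>!g. g \<in> hom1 B y L \<and> comp1 B d g = h \<and> hcomp B Ps (id2 B g) = be" .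
  next
    fix y g g' x assume "y \<in> Obj B" "g \<in> hom1 B y L" "g' \<in> hom1 B y L" "x \<in> hom2 B (comp1 B d g') (comp1 B d g)"
      "vcomp B (hcomp B (id2 B d0) x) (hcomp B Ps (id2 B g')) = vcomp B (hcomp B Ps (id2 B g)) (hcomp B (id2 B d1) x)"
    from o2[OF this(1,3,2,4) this(5)[symmetric]]
    show "\<exists>!z. z \<in> hom2 B g' g \<and> hcomp B (id2 B d) z = x" .
  qed
qed

lemma inv_co: "invertible2 (co2 B) a \<longleftrightarrow> invertible2 B a"
  unfolding invertible2_def by auto

lemma inv_inverse:
  assumes "invertible2 B a"
  obtains a' where "a' \<in> hom2 B (cod2 B a) (dom2 B a)" "invertible2 B a'"
proof -
  obtain a' where a': "a' \<in> hom2 B (cod2 B a) (dom2 B a)" "vcomp B a a' = id2 B (cod2 B a)" "vcomp B a' a = id2 B (dom2 B a)"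
    using assms unfolding invertible2_def by blast
  have "invertible2 B a'" unfolding invertible2_def
    using a' assms unfolding invertible2_def hom2_def by auto
  then show ?thesis using a' that by blast
qed

lemma equiv_co:
  assumes "equivalence1 B f"
  shows "equivalence1 (co2 B) f"
proof -
  obtain g a b where g: "f \<in> Arr B" "g \<in> hom1 B (tgt1 B f) (src1 B f)"
    and a: "a \<in> hom2 B (comp1 B g f) (id1 B (src1 B f))" "invertible2 B a"
    and b: "b \<in> hom2 B (comp1 B f g) (id1 B (tgt1 B f))" "invertible2 B b"
    using assms unfolding equivalence1_def by blast
  obtain a' where a': "a' \<in> hom2 B (cod2 B a) (dom2 B a)" "invertible2 B a'" using inv_inverse[OF a(2)] by blast
  obtain b' where b': "b' \<in> hom2 B (cod2 B b) (dom2 B b)" "invertible2 B b'" using inv_inverse[OF b(2)] by blast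
  have "a' \<in> hom2 B (id1 B (src1 B f)) (comp1 B g f)" "b' \<in> hom2 B (id1 B (tgt1 B f)) (comp1 B f g)"
    using a(1) b(1) a'(1) b'(1) unfolding hom2_def by auto
  then show ?thesis unfolding equivalence1_def using g a' b' by (auto simp: inv_co)
qed

lemma eff_co:
  assumes "effective_faithful B p"
  shows "effective_faithful (co2 B) p"
proof -
  obtain c d0 d1 al P D0 D1 D2 s0 L d Ps pH where
    e: "cokernel_diagram B p c d0 d1 al P D0 D1 D2 s0" "lax_descent B p d0 d1 D0 D1 D2 s0 L d Ps"
       "pH \<in> hom1 B (src1 B p) L" "comp1 B d pH = p" "hcomp B Ps (id2 B pH) = al" "equivalence1 B pH"
    using assms unfolding effective_faithful_def by blast
  have "cokernel_diagram (co2 B) p c d1 d0 al P D2 D1 D0 s0 \<and> lax_descent (co2 B) p d1 d0 D2 D1 D0 s0 L d Ps \<and>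
        pH \<in> hom1 (co2 B) (src1 (co2 B) p) L \<and> comp1 (co2 B) d pH = p \<and> hcomp (co2 B) Ps (id2 (co2 B) pH) = al \<and>
        equivalence1 (co2 B) pH"
    using cok_co[OF e(1)] lax_co[OF e(2)] e(3-5) equiv_co[OF e(6)] by simp
  then show ?thesis unfolding effective_faithful_def by blast
qed

lemma eff_co_iff: "effective_faithful (co2 B) p \<longleftrightarrow> effective_faithful B p"
  using eff_co[of B p] eff_co[of "co2 B" p] by auto

lemma adj_coop: "adjunction (co2 (op2 A)) f g et ep \<longleftrightarrow> adjunction A f g ep et"
  unfolding adjunction_def by (simp add: conj_ac)

lemma adj_op: "adjunction (op2 A) f g et ep \<longleftrightarrow> adjunction A g f et ep"
proof
  assume "adjunction (op2 A) f g et ep"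
  then show "adjunction A g f et ep" unfolding adjunction_def hom1_def by (simp add: conj_ac)
next
  assume "adjunction A g f et ep"
  then show "adjunction (op2 A) f g et ep" unfolding adjunction_def hom1_def by (simp add: conj_ac)
qed

lemma la_coop: "has_left_adjoint (co2 (op2 A)) l \<longleftrightarrow> has_left_adjoint A l"
  unfolding has_left_adjoint_def adj_coop by blast

lemma la_op: "has_left_adjoint (op2 A) l \<longleftrightarrow> has_right_adjoint A l"
  unfolding has_left_adjoint_def has_right_adjoint_def adj_op by blast

theorem corollary5p12:
  fixes A :: "('o, 'a, 'c) twocat" and l :: 'a
  assumes "two_category A"
    and "l \<in> Arr A"
    and "has_kernel_diagram A l"
  shows "(cokleisli_morphism A l \<longleftrightarrow> has_left_adjoint A l \<and> effective_op_faithful A l) \<and>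
         (kleisli_morphism A l \<longleftrightarrow> has_right_adjoint A l \<and> effective_op_faithful A l)"
proof -
  have t1: "two_category (op2 A)" using tc_op2[OF assms(1)] .
  have t2: "two_category (co2 (op2 A))" using tc_co2[OF t1] .
  interpret O: tc "op2 A" by unfold_locales (rule t1)
  interpret CO: tc "co2 (op2 A)" by unfold_locales (rule t2)
  have hk: "has_cokernel_diagram (op2 A) l" using assms(3) unfolding has_kernel_diagram_def .
  have l1: "l \<in> Arr (op2 A)" "l \<in> Arr (co2 (op2 A))" using assms(2) by simp_all
  have e1: "monadic (op2 A) l \<longleftrightarrow> has_left_adjoint (op2 A) l \<and> effective_faithful (op2 A) l"
    by (rule O.main_equiv[OF l1(1) hk])
  have e2: "monadic (co2 (op2 A)) l \<longleftrightarrow> has_left_adjoint (co2 (op2 A)) l \<and> effective_faithful (co2 (op2 A)) l"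
    by (rule CO.main_equiv[OF l1(2) hascok_co[OF hk]])
  show ?thesis
    unfolding cokleisli_morphism_def kleisli_morphism_def effective_op_faithful_def coop2_eq e1 e2
      la_coop la_op eff_co_iff by (rule conjI; rule refl)
qed


end
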